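(* Let $(P,\le,A_1\ldots A_k)$ be a regular poset of width $w$ and let $(u,s)$ be any characteristics. Then the poset $(\mathcal{P}(u,s),\le_{(u,s)})$ of active nodes with characteristics $(u,s)$ has width at most $\lfloor\sqrt{w}\rfloor$.
   Context: Let $(P,\le)$ be a finite poset of width $w$. For $A\subseteq P$ let $A{\uparrow}=\{y: x\le y\text{ for some }x\in A\}$, $A{\downarrow}=\{y: y\le x\text{ for some }x\in A\}$. For maximal antichains $A,B$ write $A\sqsubseteq B$ if $A\subseteq B{\downarrow}$, and $A\sqsubset B$ if also $A\ne B$. For disjoint antichains $A\sqsubset B$, $(A,B,<)$ is the bipartite graph with classes $A,B$ and edges $(a<b)$ for $a\in A,b\in B$, $a<b$; it is regular if every edge lies in a perfect matching. A regular poset $(P,\le,A_1\ldots A_k)$: $A_1,\dots,A_k$ are maximum antichains partitioning $P$, $(\{A_1,\dots,A_k\},\sqsubseteq)$ is a linear order with minimum $A_1$ and maximum $A_2$, $a<b$ for all $a\in A_1,b\in A_2$, and for every $t\in[2,k]$ and every $A_p\sqsubset A_s$ consecutive in $(\{A_1,\dots,A_t\},\sqsubseteq)$ the graph $(A_p,A_s,<)$ is regular. A node is a bipartite graph $N=(X,Y,<)$ where, for some such consecutive pair $A_p\sqsubset A_s$ (at some stage $t$), $X\subseteq A_p$, $Y\subseteq A_s$ and $X\cup Y$ is the vertex set of a connected component of $(A_p,A_s,<)$. Its width is $|X|=|Y|$, $\mathrm{Int}(N)=X{\uparrow}\cap Y{\downarrow}$, and its surplus is the largest $k$ such that $|A{\uparrow}\cap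 Y|\ge\min\{|A|+k,|Y|\}$ for all non-empty $A\subseteq X$ ($\infty$ if $N$ is complete bipartite); its characteristics is the pair (width, surplus). Node tree: the set of all nodes, where when for $t\ge3$ the antichain $A_t$ is inserted between $A_p\sqsubset A_s$ consecutive at stage $t-1$, each node $M$ of $(A_p,A_t,<)$ or $(A_t,A_s,<)$ is a child of the unique node $N$ of $(A_p,A_s,<)$ with $\mathrm{Int}(M)\subset\mathrm{Int}(N)$; it is a rooted tree with root $(A_1,A_2,<)$. A Dilworth clique of width $m$ in a node $(X,Y,<)$ is a set $\{x_1,\dots,x_m,y_1,\dots,y_m\}$ with $x_i\in X$, $y_i\in Y$, $x_i<y_j$ for all $i,j\in[m]$, such that the edges $x_1<y_1,\dots,x_m<y_m$ extend to a perfect matching of $(X,Y,<)$. A node is active if it contains a Dilworth clique of width $\lceil\sqrt{w}\rceil$ and no proper ancestor of it in the node tree has the same characteristics. For each active node $N$ fix a Dilworth clique $R(N)$ of width $\lceil\sqrt w\rceil$ in $N$. $\mathcal{P}(u,s)$ is the set of active nodes with characteristics $(u,s)$, and for $N,K\in\mathcal{P}(u,s)$, $N<_{(u,s)}K$ iff there are a maximal element $x$ of $(R(N),\le)$ and a minimal element $y$ of $(R(K),\le)$ with $x\le y$; $\le_{(u,s)}$ is the resulting partial order. *)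

theory Defs
  imports Main "HOL-Library.Extended_Nat"
begin

definition po_on :: "'a set \<Rightarrow> ('a \<Rightarrow> 'a \<Rightarrow> bool) \<Rightarrow> bool" where
  "po_on P le \<longleftrightarrow> (\<forall>x\<in>P. le x x)
     \<and> (\<forall>x\<in>P. \<forall>y\<in>P. le x y \<and> le y x \<longrightarrow> x = y)
     \<and> (\<forall>x\<in>P. \<forall>y\<in>P. \<forall>z\<in>P. le x y \<and> le y z \<longrightarrow> le x z)"

definition lt :: "('a \<Rightarrow> 'a \<Rightarrow> bool) \<Rightarrow> 'a \<Rightarrow> 'a \<Rightarrow> bool" where
  "lt le x y \<longleftrightarrow> le x y \<and> x \<noteq> y"

definition antichain_on :: "'a set \<Rightarrow> ('a \<Rightarrow> 'a \<Rightarrow> bool) \<Rightarrow> 'a set \<Rightarrow> bool" where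
  "antichain_on D r S \<longleftrightarrow> S \<subseteq> D \<and> (\<forall>x\<in>S. \<forall>y\<in>S. r x y \<longrightarrow> x = y)"

definition rel_width :: "'a set \<Rightarrow> ('a \<Rightarrow> 'a \<Rightarrow> bool) \<Rightarrow> nat" where
  "rel_width D r = Max (card ` {S. antichain_on D r S})"

definition maximum_antichain :: "'a set \<Rightarrow> ('a \<Rightarrow> 'a \<Rightarrow> bool) \<Rightarrow> 'a set \<Rightarrow> bool" where
  "maximum_antichain P le S \<longleftrightarrow> antichain_on P le S \<and> card S = rel_width P le"

definition maximal_antichain :: "'a set \<Rightarrow> ('a \<Rightarrow> 'a \<Rightarrow> bool) \<Rightarrow> 'a set \<Rightarrow> bool" where
  "maximal_antichain P le S \<longleftrightarrow> antichain_on P le S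
     \<and> (\<forall>T. antichain_on P le T \<and> S \<subseteq> T \<longrightarrow> T = S)"

definition up_set :: "'a set \<Rightarrow> ('a \<Rightarrow> 'a \<Rightarrow> bool) \<Rightarrow> 'a set \<Rightarrow> 'a set" where
  "up_set P le A = {y\<in>P. \<exists>x\<in>A. le x y}"

definition down_set :: "'a set \<Rightarrow> ('a \<Rightarrow> 'a \<Rightarrow> bool) \<Rightarrow> 'a set \<Rightarrow> 'a set" where
  "down_set P le A = {y\<in>P. \<exists>x\<in>A. le y x}"

definition ac_le :: "'a set \<Rightarrow> ('a \<Rightarrow> 'a \<Rightarrow> bool) \<Rightarrow> 'a set \<Rightarrow> 'a set \<Rightarrow> bool" where
  "ac_le P le A B \<longleftrightarrow> maximal_antichain P le A \<and> maximal_antichain P le B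
     \<and> A \<subseteq> down_set P le B"

definition ac_less :: "'a set \<Rightarrow> ('a \<Rightarrow> 'a \<Rightarrow> bool) \<Rightarrow> 'a set \<Rightarrow> 'a set \<Rightarrow> bool" where
  "ac_less P le A B \<longleftrightarrow> ac_le P le A B \<and> A \<noteq> B"

definition perfect_matching :: "('a \<Rightarrow> 'a \<Rightarrow> bool) \<Rightarrow> 'a set \<Rightarrow> 'a set \<Rightarrow> ('a \<Rightarrow> 'a) \<Rightarrow> bool" where
  "perfect_matching le X Y f \<longleftrightarrow> bij_betw f X Y \<and> (\<forall>x\<in>X. lt le x (f x))"

definition regular_bip :: "('a \<Rightarrow> 'a \<Rightarrow> bool) \<Rightarrow> 'a set \<Rightarrow> 'a set \<Rightarrow> bool" where
  "regular_bip le A B \<longleftrightarrow>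
     (\<forall>a\<in>A. \<forall>b\<in>B. lt le a b \<longrightarrow> (\<exists>f. perfect_matching le A B f \<and> f a = b))"

definition bip_edge :: "('a \<Rightarrow> 'a \<Rightarrow> bool) \<Rightarrow> 'a set \<Rightarrow> 'a set \<Rightarrow> 'a \<Rightarrow> 'a \<Rightarrow> bool" where
  "bip_edge le A B x y \<longleftrightarrow> (x \<in> A \<and> y \<in> B \<and> lt le x y) \<or> (y \<in> A \<and> x \<in> B \<and> lt le y x)"

definition bip_component :: "('a \<Rightarrow> 'a \<Rightarrow> bool) \<Rightarrow> 'a set \<Rightarrow> 'a set \<Rightarrow> 'a set \<Rightarrow> bool" where
  "bip_component le A B C \<longleftrightarrow> C \<noteq> {} \<and> C \<subseteq> A \<union> B
     \<and> (\<forall>x\<in>C. \<forall>y\<in>C. (bip_edge le A B)\<^sup>*\<^sup>* x y)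
     \<and> (\<forall>x\<in>C. \<forall>y. bip_edge le A B x y \<longrightarrow> y \<in> C)"

definition consecutive :: "'a set \<Rightarrow> ('a \<Rightarrow> 'a \<Rightarrow> bool) \<Rightarrow> (nat \<Rightarrow> 'a set) \<Rightarrow> nat \<Rightarrow> nat \<Rightarrow> nat \<Rightarrow> bool" where
  "consecutive P le A t p s \<longleftrightarrow> p \<in> {1..t} \<and> s \<in> {1..t} \<and> ac_less P le (A p) (A s)
     \<and> \<not> (\<exists>q\<in>{1..t}. ac_less P le (A p) (A q) \<and> ac_less P le (A q) (A s))"

definition regular_poset :: "'a set \<Rightarrow> ('a \<Rightarrow> 'a \<Rightarrow> bool) \<Rightarrow> (nat \<Rightarrow> 'a set) \<Rightarrow> nat \<Rightarrow> bool" where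
  "regular_poset P le A k \<longleftrightarrow> finite P \<and> po_on P le \<and> 2 \<le> k
     \<and> (\<forall>i\<in>{1..k}. maximum_antichain P le (A i))
     \<and> (\<forall>i\<in>{1..k}. \<forall>j\<in>{1..k}. i \<noteq> j \<longrightarrow> A i \<inter> A j = {})
     \<and> (\<Union>i\<in>{1..k}. A i) = P
     \<and> (\<forall>i\<in>{1..k}. \<forall>j\<in>{1..k}. ac_le P le (A i) (A j) \<or> ac_le P le (A j) (A i))
     \<and> (\<forall>i\<in>{1..k}. ac_le P le (A 1) (A i) \<and> ac_le P le (A i) (A 2))
     \<and> (\<forall>a\<in>A 1. \<forall>b\<in>A 2. lt le a b)
     \<and> (\<forall>t\<in>{2..k}. \<forall>p s. consecutive P le A t p s \<longrightarrow> regular_bip le (A p) (A s))"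

definition node_of :: "('a \<Rightarrow> 'a \<Rightarrow> bool) \<Rightarrow> 'a set \<Rightarrow> 'a set \<Rightarrow> 'a set \<times> 'a set \<Rightarrow> bool" where
  "node_of le Ap As N \<longleftrightarrow> fst N \<subseteq> Ap \<and> snd N \<subseteq> As \<and> bip_component le Ap As (fst N \<union> snd N)"

definition is_node :: "'a set \<Rightarrow> ('a \<Rightarrow> 'a \<Rightarrow> bool) \<Rightarrow> (nat \<Rightarrow> 'a set) \<Rightarrow> nat \<Rightarrow> 'a set \<times> 'a set \<Rightarrow> bool" where
  "is_node P le A k N \<longleftrightarrow>
     (\<exists>t\<in>{2..k}. \<exists>p s. consecutive P le A t p s \<and> node_of le (A p) (A s) N)"

definition node_int :: "'a set \<Rightarrow> ('a \<Rightarrow> 'a \<Rightarrow> bool) \<Rightarrow> 'a set \<times> 'a set \<Rightarrow> 'a set" where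
  "node_int P le N = up_set P le (fst N) \<inter> down_set P le (snd N)"

definition node_child :: "'a set \<Rightarrow> ('a \<Rightarrow> 'a \<Rightarrow> bool) \<Rightarrow> (nat \<Rightarrow> 'a set) \<Rightarrow> nat
    \<Rightarrow> 'a set \<times> 'a set \<Rightarrow> 'a set \<times> 'a set \<Rightarrow> bool" where
  "node_child P le A k M N \<longleftrightarrow>
     (\<exists>t\<in>{3..k}. \<exists>p s. consecutive P le A (t - 1) p s
        \<and> ac_less P le (A p) (A t) \<and> ac_less P le (A t) (A s)
        \<and> node_of le (A p) (A s) N
        \<and> (node_of le (A p) (A t) M \<or> node_of le (A t) (A s) M)
        \<and> node_int P le M \<subset> node_int P le N)"

definition surplus :: "'a set \<Rightarrow> ('a \<Rightarrow> 'a \<Rightarrow> bool) \<Rightarrow> 'a set \<times> 'a set \<Rightarrow> enat" where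
  "surplus P le N =
     (if (\<forall>x\<in>fst N. \<forall>y\<in>snd N. lt le x y) then \<infinity>
      else enat (GREATEST k::nat. \<forall>S. S \<subseteq> fst N \<and> S \<noteq> {} \<longrightarrow>
               card (up_set P le S \<inter> snd N) \<ge> min (card S + k) (card (snd N))))"

definition characteristics :: "'a set \<Rightarrow> ('a \<Rightarrow> 'a \<Rightarrow> bool) \<Rightarrow> 'a set \<times> 'a set \<Rightarrow> nat \<times> enat" where
  "characteristics P le N = (card (fst N), surplus P le N)"

definition dilworth_clique :: "('a \<Rightarrow> 'a \<Rightarrow> bool) \<Rightarrow> 'a set \<times> 'a set \<Rightarrow> nat \<Rightarrow> 'a set \<Rightarrow> bool" where
  "dilworth_clique le N m C \<longleftrightarrow>
     (\<exists>xs ys. inj_on xs {..<m} \<and> inj_on ys {..<m}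
        \<and> xs ` {..<m} \<subseteq> fst N \<and> ys ` {..<m} \<subseteq> snd N
        \<and> (\<forall>i<m. \<forall>j<m. lt le (xs i) (ys j))
        \<and> (\<exists>f. perfect_matching le (fst N) (snd N) f \<and> (\<forall>i<m. f (xs i) = ys i))
        \<and> C = xs ` {..<m} \<union> ys ` {..<m})"

definition clique_size :: "'a set \<Rightarrow> ('a \<Rightarrow> 'a \<Rightarrow> bool) \<Rightarrow> nat" where
  "clique_size P le = nat \<lceil>sqrt (real (rel_width P le))\<rceil>"

definition active :: "'a set \<Rightarrow> ('a \<Rightarrow> 'a \<Rightarrow> bool) \<Rightarrow> (nat \<Rightarrow> 'a set) \<Rightarrow> nat \<Rightarrow> 'a set \<times> 'a set \<Rightarrow> bool" where
  "active P le A k N \<longleftrightarrow> is_node P le A k N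
     \<and> (\<exists>C. dilworth_clique le N (clique_size P le) C)
     \<and> \<not> (\<exists>K. (node_child P le A k)\<^sup>+\<^sup>+ N K
              \<and> characteristics P le K = characteristics P le N)"

definition active_nodes :: "'a set \<Rightarrow> ('a \<Rightarrow> 'a \<Rightarrow> bool) \<Rightarrow> (nat \<Rightarrow> 'a set) \<Rightarrow> nat
    \<Rightarrow> nat \<Rightarrow> enat \<Rightarrow> ('a set \<times> 'a set) set" where
  "active_nodes P le A k u s = {N. active P le A k N \<and> characteristics P le N = (u, s)}"

definition maximal_in :: "('a \<Rightarrow> 'a \<Rightarrow> bool) \<Rightarrow> 'a set \<Rightarrow> 'a \<Rightarrow> bool" where
  "maximal_in le C x \<longleftrightarrow> x \<in> C \<and> \<not> (\<exists>y\<in>C. lt le x y)"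

definition minimal_in :: "('a \<Rightarrow> 'a \<Rightarrow> bool) \<Rightarrow> 'a set \<Rightarrow> 'a \<Rightarrow> bool" where
  "minimal_in le C x \<longleftrightarrow> x \<in> C \<and> \<not> (\<exists>y\<in>C. lt le y x)"

definition node_less :: "('a \<Rightarrow> 'a \<Rightarrow> bool) \<Rightarrow> ('a set \<times> 'a set \<Rightarrow> 'a set)
    \<Rightarrow> 'a set \<times> 'a set \<Rightarrow> 'a set \<times> 'a set \<Rightarrow> bool" where
  "node_less le R N K \<longleftrightarrow> (\<exists>x y. maximal_in le (R N) x \<and> minimal_in le (R K) y \<and> le x y)"

end

theory Submission
  imports Defs
begin


lemma lt_iff: "lt le x y \<longleftrightarrow> le x y \<and> x \<noteq> y" by (simp add: lt_def)

lemma edge_sym: "bip_edge le X Y x y = bip_edge le X Y y x"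
  unfolding bip_edge_def by auto

lemma rtr_sym:
  assumes "(bip_edge le X Y)\<^sup>*\<^sup>* x y" shows "(bip_edge le X Y)\<^sup>*\<^sup>* y x"
  using assms
proof (induction rule: rtranclp_induct)
  case base then show ?case by simp
next
  case (step y z)
  then show ?case using edge_sym[of le X Y y z]
    by (metis converse_rtranclp_into_rtranclp)
qed

lemma comp_closed:
  assumes "bip_component le X Y C" "v \<in> C" "(bip_edge le X Y)\<^sup>*\<^sup>* v z"
  shows "z \<in> C"
  using assms(3,2) assms(1) unfolding bip_component_def
  by (induction rule: rtranclp_induct) auto

definition compo :: "('a \<Rightarrow> 'a \<Rightarrow> bool) \<Rightarrow> 'a set \<Rightarrow> 'a set \<Rightarrow> 'a \<Rightarrow> 'a set" where
  "compo le X Y v = {z. (bip_edge le X Y)\<^sup>*\<^sup>* v z}"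

definition cnode :: "('a \<Rightarrow> 'a \<Rightarrow> bool) \<Rightarrow> 'a set \<Rightarrow> 'a set \<Rightarrow> 'a \<Rightarrow> 'a set \<times> 'a set" where
  "cnode le X Y v = (compo le X Y v \<inter> X, compo le X Y v \<inter> Y)"

lemma compo_sub:
  assumes "v \<in> X \<union> Y" shows "compo le X Y v \<subseteq> X \<union> Y"
proof
  fix z assume "z \<in> compo le X Y v"
  then have "(bip_edge le X Y)\<^sup>*\<^sup>* v z" by (simp add: compo_def)
  then show "z \<in> X \<union> Y" using assms
    by (induction rule: rtranclp_induct) (auto simp: bip_edge_def)
qed

lemma compo_component:
  assumes "v \<in> X \<union> Y" shows "bip_component le X Y (compo le X Y v)"
  unfolding bip_component_def
proof (intro conjI ballI allI impI)
  show "compo le X Y v \<noteq> {}" by (auto simp: compo_def)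
  show "compo le X Y v \<subseteq> X \<union> Y" by (rule compo_sub[OF assms])
next
  fix x y assume "x \<in> compo le X Y v" "y \<in> compo le X Y v"
  then show "(bip_edge le X Y)\<^sup>*\<^sup>* x y" unfolding compo_def
    using rtr_sym by (metis mem_Collect_eq rtranclp_trans)
next
  fix x y assume "x \<in> compo le X Y v" "bip_edge le X Y x y"
  then show "y \<in> compo le X Y v" unfolding compo_def
    by (simp add: rtranclp.rtrancl_into_rtrancl)
qed

lemma cnode_node:
  assumes "X \<inter> Y = {}" "v \<in> X \<union> Y"
  shows "node_of le X Y (cnode le X Y v)" "v \<in> fst (cnode le X Y v) \<union> snd (cnode le X Y v)"
proof -
  have u: "fst (cnode le X Y v) \<union> snd (cnode le X Y v) = compo le X Y v"
    using compo_sub[OF assms(2)] by (auto simp: cnode_def)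
  show "node_of le X Y (cnode le X Y v)"
    unfolding node_of_def u using compo_component[OF assms(2)] by (auto simp: cnode_def)
  show "v \<in> fst (cnode le X Y v) \<union> snd (cnode le X Y v)" unfolding u by (simp add: compo_def)
qed

lemma node_closed:
  assumes "node_of le X Y N" "x \<in> fst N \<union> snd N" "bip_edge le X Y x y"
  shows "y \<in> fst N \<union> snd N"
  using assms unfolding node_of_def bip_component_def by blast

lemma node_fst:
  assumes "node_of le X Y N" "X \<inter> Y = {}"
  shows "fst N = (fst N \<union> snd N) \<inter> X" "snd N = (fst N \<union> snd N) \<inter> Y"
  using assms unfolding node_of_def by auto

lemma node_eq:
  assumes "X \<inter> Y = {}" "node_of le X Y N" "node_of le X Y N'"
    "z \<in> fst N \<union> snd N" "z \<in> fst N' \<union> snd N'"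
  shows "N = N'"
proof -
  have c1: "bip_component le X Y (fst N \<union> snd N)" and c2: "bip_component le X Y (fst N' \<union> snd N')"
    using assms(2,3) by (auto simp: node_of_def)
  have "fst N \<union> snd N \<subseteq> fst N' \<union> snd N'"
  proof
    fix a assume "a \<in> fst N \<union> snd N"
    then have "(bip_edge le X Y)\<^sup>*\<^sup>* z a" using c1 assms(4) unfolding bip_component_def by blast
    then show "a \<in> fst N' \<union> snd N'" using comp_closed[OF c2 assms(5)] by blast
  qed
  moreover have "fst N' \<union> snd N' \<subseteq> fst N \<union> snd N"
  proof
    fix a assume "a \<in> fst N' \<union> snd N'"
    then have "(bip_edge le X Y)\<^sup>*\<^sup>* z a" using c2 assms(5) unfolding bip_component_def by blast
    then show "a \<in> fst N \<union> snd N" using comp_closed[OF c1 assms(4)] by blast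
  qed
  ultimately have e: "fst N \<union> snd N = fst N' \<union> snd N'" by blast
  have "fst N = fst N'" "snd N = snd N'"
    using node_fst[OF assms(2,1)] node_fst[OF assms(3,1)] e by metis+
  then show ?thesis by (simp add: prod_eq_iff)
qed



locale RP =
  fixes P :: "'a set" and le :: "'a \<Rightarrow> 'a \<Rightarrow> bool" and A :: "nat \<Rightarrow> 'a set" and k :: nat
  assumes rp: "regular_poset P le A k" and wpos: "0 < rel_width P le"
begin

lemma finP: "finite P" and po: "po_on P le" and k2: "2 \<le> k"
  and maxm: "\<And>i. i \<in> {1..k} \<Longrightarrow> maximum_antichain P le (A i)"
  and disj0: "\<And>i j. i \<in> {1..k} \<Longrightarrow> j \<in> {1..k} \<Longrightarrow> i \<noteq> j \<Longrightarrow> A i \<inter> A j = {}"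
  and cover: "(\<Union>i\<in>{1..k}. A i) = P"
  and lin: "\<And>i j. i \<in> {1..k} \<Longrightarrow> j \<in> {1..k} \<Longrightarrow> ac_le P le (A i) (A j) \<or> ac_le P le (A j) (A i)"
  and bnd: "\<And>i. i \<in> {1..k} \<Longrightarrow> ac_le P le (A 1) (A i) \<and> ac_le P le (A i) (A 2)"
  and compl: "\<And>a b. a \<in> A 1 \<Longrightarrow> b \<in> A 2 \<Longrightarrow> lt le a b"
  and regs: "\<And>t p s. t \<in> {2..k} \<Longrightarrow> consecutive P le A t p s \<Longrightarrow> regular_bip le (A p) (A s)"
  using rp unfolding regular_poset_def by blast+

lemma refl: "x \<in> P \<Longrightarrow> le x x" using po unfolding po_on_def by blast
lemma antisym: "x \<in> P \<Longrightarrow> y \<in> P \<Longrightarrow> le x y \<Longrightarrow> le y x \<Longrightarrow> x = y" using po unfolding po_on_def by blast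
lemma trans: "x \<in> P \<Longrightarrow> y \<in> P \<Longrightarrow> z \<in> P \<Longrightarrow> le x y \<Longrightarrow> le y z \<Longrightarrow> le x z" using po unfolding po_on_def by blast

lemma lt_le_trans: "x \<in> P \<Longrightarrow> y \<in> P \<Longrightarrow> z \<in> P \<Longrightarrow> lt le x y \<Longrightarrow> le y z \<Longrightarrow> lt le x z"
  unfolding lt_def using trans antisym by blast
lemma le_lt_trans: "x \<in> P \<Longrightarrow> y \<in> P \<Longrightarrow> z \<in> P \<Longrightarrow> le x y \<Longrightarrow> lt le y z \<Longrightarrow> lt le x z"
  unfolding lt_def using trans antisym by blast

abbreviation "w \<equiv> rel_width P le"

lemma maxl: "i \<in> {1..k} \<Longrightarrow> maximal_antichain P le (A i)"
  using bnd unfolding ac_le_def by blast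

lemma max_anti0: "maximal_antichain P le X \<Longrightarrow> X \<subseteq> P \<and> (\<forall>x\<in>X. \<forall>y\<in>X. le x y \<longrightarrow> x = y)"
  unfolding maximal_antichain_def antichain_on_def by blast

lemma Asub: "i \<in> {1..k} \<Longrightarrow> A i \<subseteq> P"
  using maxl max_anti0 by blast

lemma Aanti: "i \<in> {1..k} \<Longrightarrow> x \<in> A i \<Longrightarrow> y \<in> A i \<Longrightarrow> le x y \<Longrightarrow> x = y"
  using maxl max_anti0 by metis

lemma Acard: "i \<in> {1..k} \<Longrightarrow> card (A i) = w"
  using maxm unfolding maximum_antichain_def by blast

lemma Afin: "i \<in> {1..k} \<Longrightarrow> finite (A i)" using Asub finP finite_subset by blast

lemma Ane: "i \<in> {1..k} \<Longrightarrow> A i \<noteq> {}" using Acard wpos by fastforce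

lemma Aidx: "i \<in> {1..k} \<Longrightarrow> j \<in> {1..k} \<Longrightarrow> x \<in> A i \<Longrightarrow> x \<in> A j \<Longrightarrow> i = j"
  using disj0 by blast

lemma Aeq: "i \<in> {1..k} \<Longrightarrow> j \<in> {1..k} \<Longrightarrow> A i = A j \<Longrightarrow> i = j"
  using Ane Aidx by blast

lemma maximal_cmp:
  assumes "maximal_antichain P le M" "z \<in> P" "z \<notin> M"
  shows "\<exists>m\<in>M. le z m \<or> le m z"
proof (rule ccontr)
  assume "\<not> ?thesis"
  then have n: "\<forall>m\<in>M. \<not> le z m \<and> \<not> le m z" by blast
  have "antichain_on P le M" using assms(1) unfolding maximal_antichain_def by blast
  then have "antichain_on P le (insert z M)"
    using assms(2) n unfolding antichain_on_def by blast
  then have "insert z M = M" using assms(1) unfolding maximal_antichain_def by blast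
  then show False using assms(3) by blast
qed

lemma max_anti: "maximal_antichain P le X \<Longrightarrow> X \<subseteq> P \<and> (\<forall>x\<in>X. \<forall>y\<in>X. le x y \<longrightarrow> x = y)"
  unfolding maximal_antichain_def antichain_on_def by blast

lemma acle_sub: "ac_le P le X Y \<Longrightarrow> X \<subseteq> P \<and> Y \<subseteq> P"
  unfolding ac_le_def using max_anti by blast

lemma acle_anti: "ac_le P le X Y \<Longrightarrow> (\<forall>x\<in>X. \<forall>y\<in>X. le x y \<longrightarrow> x = y) \<and> (\<forall>x\<in>Y. \<forall>y\<in>Y. le x y \<longrightarrow> x = y)"
  unfolding ac_le_def using max_anti by blast

lemma acle_down: "ac_le P le X Y \<Longrightarrow> x \<in> X \<Longrightarrow> \<exists>y\<in>Y. le x y"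
  unfolding ac_le_def down_set_def by (auto simp only: subset_iff mem_Collect_eq)

lemma acle_up:
  assumes "ac_le P le X Y" "y \<in> Y" shows "\<exists>x\<in>X. le x y"
proof (cases "y \<in> X")
  case True
  have "y \<in> P" using acle_sub[OF assms(1)] assms(2) by blast
  then show ?thesis using True refl by blast
next
  case False
  have mx: "maximal_antichain P le X" using assms unfolding ac_le_def by blast
  have yP: "y \<in> P" using acle_sub[OF assms(1)] assms(2) by blast
  obtain m where m: "m \<in> X" "le y m \<or> le m y" using maximal_cmp[OF mx yP False] by blast
  show ?thesis
  proof (cases "le m y")
    case True then show ?thesis using m by blast
  next
    case False
    then have "le y m" using m by blast
    obtain y' where "y' \<in> Y" "le m y'" using acle_down[OF assms(1) m(1)] by blast
    have mP: "m \<in> P" "y' \<in> P" using m(1) \<open>y' \<in> Y\<close> acle_sub[OF assms(1)] by blast+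
    have "le y y'" using trans[OF yP mP(1) mP(2) \<open>le y m\<close> \<open>le m y'\<close>] .
    then have "y = y'" using acle_anti[OF assms(1)] \<open>y' \<in> Y\<close> assms(2) by blast
    then have "m = y" using antisym[OF mP(1) yP] \<open>le y m\<close> \<open>le m y'\<close> by blast
    then show ?thesis using False refl[OF yP] by blast
  qed
qed

lemma acle_trans:
  assumes "ac_le P le X Y" "ac_le P le Y Z" shows "ac_le P le X Z"
proof -
  have "X \<subseteq> down_set P le Z"
  proof
    fix x assume x: "x \<in> X"
    obtain y where y: "y \<in> Y" "le x y" using acle_down[OF assms(1) x] by blast
    obtain z where z: "z \<in> Z" "le y z" using acle_down[OF assms(2) y(1)] by blast
    have "x \<in> P" "y \<in> P" "z \<in> P" using acle_sub[OF assms(1)] acle_sub[OF assms(2)] x y z by blast+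
    then have "le x z" using trans y(2) z(2) by blast
    then show "x \<in> down_set P le Z" unfolding down_set_def using z \<open>x \<in> P\<close> by blast
  qed
  then show ?thesis using assms unfolding ac_le_def by blast
qed

lemma acle_antisym:
  assumes "ac_le P le X Y" "ac_le P le Y X" shows "X = Y"
proof -
  have a: "X \<subseteq> Y" if h1: "ac_le P le X Y" and h2: "ac_le P le Y X" for X Y
  proof
    fix x assume "x \<in> X"
    obtain y where y: "y \<in> Y" "le x y" using acle_down[OF h1 \<open>x \<in> X\<close>] by blast
    obtain x' where x': "x' \<in> X" "le y x'" using acle_down[OF h2 y(1)] by blast
    have P: "x \<in> P" "y \<in> P" "x' \<in> P" using acle_sub[OF h1] \<open>x \<in> X\<close> y x' by blast+
    have "le x x'" using trans P y x' by blast
    then have "x = x'" using acle_anti[OF h1] \<open>x \<in> X\<close> x' by blast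
    then have "x = y" using antisym P y x' by blast
    then show "x \<in> Y" using y by blast
  qed
  show ?thesis using a[OF assms] a[OF assms(2,1)] by blast
qed

lemma acless_trans: "ac_less P le X Y \<Longrightarrow> ac_less P le Y Z \<Longrightarrow> ac_less P le X Z"
proof -
  assume a: "ac_less P le X Y" "ac_less P le Y Z"
  then have "ac_le P le X Z" unfolding ac_less_def using acle_trans by blast
  moreover have "X \<noteq> Z"
  proof
    assume "X = Z"
    then have "ac_le P le Y X" using a unfolding ac_less_def by simp
    then show False using a acle_antisym unfolding ac_less_def by blast
  qed
  ultimately show ?thesis unfolding ac_less_def by blast
qed

lemma acless_irrefl: "\<not> ac_less P le X X" unfolding ac_less_def by blast

lemma acless_asym: "ac_less P le X Y \<Longrightarrow> \<not> ac_le P le Y X"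
  unfolding ac_less_def using acle_antisym by blast

lemma idx_lt_disj:
  assumes "i \<in> {1..k}" "j \<in> {1..k}" "ac_less P le (A i) (A j)"
  shows "i \<noteq> j" "A i \<inter> A j = {}"
  using assms disj0 unfolding ac_less_def by auto

lemma acle_up_lt:
  assumes "i \<in> {1..k}" "j \<in> {1..k}" "ac_less P le (A i) (A j)" "y \<in> A j"
  shows "\<exists>x\<in>A i. lt le x y"
proof -
  have "ac_le P le (A i) (A j)" using assms(3) unfolding ac_less_def by blast
  then obtain x where "x \<in> A i" "le x y" using acle_up assms(4) by blast
  moreover have "x \<noteq> y" using idx_lt_disj[OF assms(1-3)] assms(4) \<open>x \<in> A i\<close> by blast
  ultimately show ?thesis unfolding lt_def by blast
qed

lemma acle_down_lt:
  assumes "i \<in> {1..k}" "j \<in> {1..k}" "ac_less P le (A i) (A j)" "x \<in> A i"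
  shows "\<exists>y\<in>A j. lt le x y"
proof -
  have "ac_le P le (A i) (A j)" using assms(3) unfolding ac_less_def by blast
  then obtain y where "y \<in> A j" "le x y" using acle_down assms(4) by blast
  moreover have "x \<noteq> y" using idx_lt_disj[OF assms(1-3)] assms(4) \<open>y \<in> A j\<close> by blast
  ultimately show ?thesis unfolding lt_def by blast
qed

lemma not_below:
  assumes "i \<in> {1..k}" "j \<in> {1..k}" "ac_less P le (A i) (A j)" "y \<in> A j" "x \<in> A i"
  shows "\<not> le y x"
proof
  assume h: "le y x"
  obtain y' where y': "y' \<in> A j" "le x y'" using acle_down[of "A i" "A j" x] assms unfolding ac_less_def by blast
  have P: "x \<in> P" "y \<in> P" "y' \<in> P" using Asub assms y' by blast+
  have "y = y'" using Aanti[OF assms(2)] assms(4) y' trans[OF P(2,1,3) h y'(2)] by blast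
  then have "x = y" using antisym P h y' by blast
  then show False using idx_lt_disj[OF assms(1-3)] assms(4,5) by blast
qed

end


context RP begin

abbreviation Ls where "Ls i j \<equiv> ac_less P le (A i) (A j)"

lemma node_sub:
  assumes "node_of le (A p) (A s) N" shows "fst N \<subseteq> A p" "snd N \<subseteq> A s"
  using assms unfolding node_of_def by blast+

lemma node_right:
  assumes "p \<in> {1..k}" "s \<in> {1..k}" "Ls p s" "node_of le (A p) (A s) N"
    "x \<in> fst N" "y \<in> A s" "lt le x y"
  shows "y \<in> snd N"
proof -
  have d: "A p \<inter> A s = {}" using idx_lt_disj[OF assms(1-3)] by blast
  have "bip_edge le (A p) (A s) x y" using assms node_sub[OF assms(4)] unfolding bip_edge_def by blast
  then have "y \<in> fst N \<union> snd N" using node_closed[OF assms(4)] assms(5) by blast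
  then show ?thesis using node_fst[OF assms(4) d] assms(6) d by blast
qed

lemma node_left:
  assumes "p \<in> {1..k}" "s \<in> {1..k}" "Ls p s" "node_of le (A p) (A s) N"
    "y \<in> snd N" "x \<in> A p" "lt le x y"
  shows "x \<in> fst N"
proof -
  have d: "A p \<inter> A s = {}" using idx_lt_disj[OF assms(1-3)] by blast
  have "bip_edge le (A p) (A s) y x" using assms node_sub[OF assms(4)] unfolding bip_edge_def by blast
  then have "x \<in> fst N \<union> snd N" using node_closed[OF assms(4)] assms(5) by blast
  then show ?thesis using node_fst[OF assms(4) d] assms(6) d by blast
qed

lemma node_sides:
  assumes "p \<in> {1..k}" "s \<in> {1..k}" "Ls p s" "node_of le (A p) (A s) N"
  shows "\<forall>x\<in>fst N. \<exists>y\<in>snd N. lt le x y" "\<forall>y\<in>snd N. \<exists>x\<in>fst N. lt le x y"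
    "fst N \<noteq> {}" "snd N \<noteq> {}"
proof -
  show a: "\<forall>x\<in>fst N. \<exists>y\<in>snd N. lt le x y"
  proof
    fix x assume x: "x \<in> fst N"
    then obtain y where "y \<in> A s" "lt le x y" using acle_down_lt[OF assms(1-3)] node_sub[OF assms(4)] by blast
    then show "\<exists>y\<in>snd N. lt le x y" using node_right[OF assms x] by blast
  qed
  show b: "\<forall>y\<in>snd N. \<exists>x\<in>fst N. lt le x y"
  proof
    fix y assume y: "y \<in> snd N"
    then obtain x where "x \<in> A p" "lt le x y" using acle_up_lt[OF assms(1-3)] node_sub[OF assms(4)] by blast
    then show "\<exists>x\<in>fst N. lt le x y" using node_left[OF assms y] by blast
  qed
  have "fst N \<union> snd N \<noteq> {}" using assms(4) unfolding node_of_def bip_component_def by blast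
  then show "fst N \<noteq> {}" "snd N \<noteq> {}" using a b by blast+
qed

lemma node_P:
  assumes "p \<in> {1..k}" "s \<in> {1..k}" "node_of le (A p) (A s) N"
  shows "fst N \<subseteq> P" "snd N \<subseteq> P"
  using node_sub[OF assms(3)] Asub assms(1,2) by blast+

lemma lower_child:
  assumes idx: "p \<in> {1..k}" "m \<in> {1..k}" "s \<in> {1..k}"
    and ls: "Ls p m" "Ls m s"
    and N: "node_of le (A p) (A s) N" and L: "node_of le (A p) (A m) L"
    and x0: "x0 \<in> fst L" "x0 \<in> fst N"
  shows "fst L \<subseteq> fst N" "\<forall>z\<in>snd L. \<exists>x'\<in>fst N. lt le x' z"
    "snd L \<subseteq> down_set P le (snd N)" "node_int P le L \<subset> node_int P le N"
proof -
  have ps: "Ls p s" using acless_trans ls by blast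
  have dpm: "A p \<inter> A m = {}" using idx_lt_disj[OF idx(1,2) ls(1)] by blast
  have dms: "A m \<inter> A s = {}" using idx_lt_disj[OF idx(2,3) ls(2)] by blast
  have dps: "A p \<inter> A s = {}" using idx_lt_disj[OF idx(1,3) ps] by blast
  have above: "\<exists>y\<in>snd N. le z y" if z: "z \<in> A m" and x': "x' \<in> fst N" "lt le x' z" for z x'
  proof -
    obtain y where y: "y \<in> A s" "lt le z y" using acle_down_lt[OF idx(2,3) ls(2) z] by blast
    have P: "x' \<in> P" "z \<in> P" "y \<in> P" using Asub idx x' node_sub[OF N] z y(1) by blast+
    have "lt le x' y" using lt_le_trans[OF P] x'(2) y(2) unfolding lt_def by blast
    then have "y \<in> snd N" using node_right[OF idx(1,3) ps N x'(1) y(1)] by blast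
    then show ?thesis using y unfolding lt_def by blast
  qed
  define Phi where "Phi z \<longleftrightarrow> (z \<in> A p \<longrightarrow> z \<in> fst N) \<and> (z \<in> A m \<longrightarrow> (\<exists>x'\<in>fst N. lt le x' z))" for z
  have reach: "Phi z" if "(bip_edge le (A p) (A m))\<^sup>*\<^sup>* x0 z" for z
    using that
  proof (induction rule: rtranclp_induct)
    case base then show ?case using x0 dpm node_sub[OF L] unfolding Phi_def by blast
  next
    case (step z z')
    from step.hyps(2) consider (a) "z \<in> A p" "z' \<in> A m" "lt le z z'" | (b) "z' \<in> A p" "z \<in> A m" "lt le z' z"
      unfolding bip_edge_def by blast
    then show ?case
    proof cases
      case a
      then have "z \<in> fst N" using step.IH unfolding Phi_def by blast
      then show ?thesis using a dpm unfolding Phi_def by blast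
    next
      case b
      then obtain x' where x': "x' \<in> fst N" "lt le x' z" using step.IH unfolding Phi_def by blast
      obtain y where y: "y \<in> snd N" "le z y" using above[OF b(2) x'] by blast
      have P: "z' \<in> P" "z \<in> P" "y \<in> P" using Asub idx b node_sub[OF N] y(1) by blast+
      have "lt le z' y" using lt_le_trans[OF P] b(3) y(2) by blast
      then have "z' \<in> fst N" using node_left[OF idx(1,3) ps N y(1) b(1)] by blast
      then show ?thesis using b dpm unfolding Phi_def by blast
    qed
  qed
  have allL: "Phi z" if "z \<in> fst L \<union> snd L" for z
  proof -
    have "(bip_edge le (A p) (A m))\<^sup>*\<^sup>* x0 z" using L that x0(1) unfolding node_of_def bip_component_def by blast
    then show ?thesis using reach by blast
  qed
  show f: "fst L \<subseteq> fst N" using allL node_sub[OF L] unfolding Phi_def by blast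
  show s1: "\<forall>z\<in>snd L. \<exists>x'\<in>fst N. lt le x' z" using allL node_sub[OF L] unfolding Phi_def by blast
  show s2: "snd L \<subseteq> down_set P le (snd N)"
  proof
    fix z assume z: "z \<in> snd L"
    then obtain x' where "x' \<in> fst N" "lt le x' z" using s1 by blast
    then obtain y where "y \<in> snd N" "le z y" using above z node_sub[OF L] by blast
    then show "z \<in> down_set P le (snd N)" unfolding down_set_def using z node_P[OF idx(1,2) L] by blast
  qed
  have sub: "node_int P le L \<subseteq> node_int P le N"
  proof
    fix v assume "v \<in> node_int P le L"
    then obtain a b where v: "v \<in> P" "a \<in> fst L" "le a v" "b \<in> snd L" "le v b"
      unfolding node_int_def up_set_def down_set_def by blast
    obtain y where y: "y \<in> snd N" "le b y" using s2 v(4) unfolding down_set_def by blast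
    have P: "v \<in> P" "b \<in> P" "y \<in> P" using v(1) node_P[OF idx(1,2) L] node_P[OF idx(1,3) N] v(4) y(1) by blast+
    have "le v y" using trans[OF P v(5) y(2)] .
    then show "v \<in> node_int P le N" unfolding node_int_def up_set_def down_set_def
      using v f y(1) by blast
  qed
  obtain y where y: "y \<in> snd N" using node_sides[OF idx(1,3) ps N] by blast
  obtain x where x: "x \<in> fst N" "lt le x y" using node_sides(2)[OF idx(1,3) ps N] y by blast
  have yP: "y \<in> P" using node_P[OF idx(1,3) N] y by blast
  have yin: "y \<in> node_int P le N" unfolding node_int_def up_set_def down_set_def
    using x y yP refl[OF yP] unfolding lt_def by blast
  have ynot: "y \<notin> node_int P le L"
  proof
    assume "y \<in> node_int P le L"
    then obtain b where b: "b \<in> snd L" "le y b" unfolding node_int_def down_set_def by blast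
    have bm: "b \<in> A m" using b node_sub[OF L] by blast
    have "y \<in> A s" using y node_sub[OF N] by blast
    then show False using not_below[OF idx(2,3) ls(2) \<open>y \<in> A s\<close> bm] b(2) by blast
  qed
  show "node_int P le L \<subset> node_int P le N" using sub yin ynot by blast
qed

lemma upper_child:
  assumes idx: "p \<in> {1..k}" "m \<in> {1..k}" "s \<in> {1..k}"
    and ls: "Ls p m" "Ls m s"
    and N: "node_of le (A p) (A s) N" and U: "node_of le (A m) (A s) U"
    and y0: "y0 \<in> snd U" "y0 \<in> snd N"
  shows "snd U \<subseteq> snd N" "\<forall>z\<in>fst U. \<exists>x'\<in>fst N. lt le x' z"
    "node_int P le U \<subset> node_int P le N"
proof -
  have ps: "Ls p s" using acless_trans ls by blast
  have dpm: "A p \<inter> A m = {}" using idx_lt_disj[OF idx(1,2) ls(1)] by blast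
  have dms: "A m \<inter> A s = {}" using idx_lt_disj[OF idx(2,3) ls(2)] by blast
  have dps: "A p \<inter> A s = {}" using idx_lt_disj[OF idx(1,3) ps] by blast
  define Phi where "Phi z \<longleftrightarrow> (z \<in> A s \<longrightarrow> z \<in> snd N) \<and> (z \<in> A m \<longrightarrow> (\<exists>x'\<in>fst N. lt le x' z))" for z
  have reach: "Phi z" if "(bip_edge le (A m) (A s))\<^sup>*\<^sup>* y0 z" for z
    using that
  proof (induction rule: rtranclp_induct)
    case base then show ?case using y0 dms node_sub[OF U] unfolding Phi_def by blast
  next
    case (step z z')
    from step.hyps(2) consider (a) "z \<in> A m" "z' \<in> A s" "lt le z z'" | (b) "z' \<in> A m" "z \<in> A s" "lt le z' z"
      unfolding bip_edge_def by blast
    then show ?case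
    proof cases
      case a
      then obtain x' where x': "x' \<in> fst N" "lt le x' z" using step.IH unfolding Phi_def by blast
      have P: "x' \<in> P" "z \<in> P" "z' \<in> P" using Asub idx a node_P[OF idx(1,3) N] x'(1) by blast+
      have "lt le x' z'" using lt_le_trans[OF P x'(2)] a(3) unfolding lt_def by blast
      then have "z' \<in> snd N" using node_right[OF idx(1,3) ps N x'(1) a(2)] by blast
      then show ?thesis using a dms unfolding Phi_def by blast
    next
      case b
      then have zN: "z \<in> snd N" using step.IH unfolding Phi_def by blast
      obtain a where a: "a \<in> A p" "lt le a z'" using acle_up_lt[OF idx(1,2) ls(1) b(1)] by blast
      have P: "a \<in> P" "z' \<in> P" "z \<in> P" using Asub idx a b by blast+
      have "lt le a z" using lt_le_trans[OF P a(2)] b(3) unfolding lt_def by blast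
      then have "a \<in> fst N" using node_left[OF idx(1,3) ps N zN a(1)] by blast
      then show ?thesis using a b dms unfolding Phi_def by blast
    qed
  qed
  have allU: "Phi z" if "z \<in> fst U \<union> snd U" for z
  proof -
    have "(bip_edge le (A m) (A s))\<^sup>*\<^sup>* y0 z" using U that y0(1) unfolding node_of_def bip_component_def by blast
    then show ?thesis using reach by blast
  qed
  show s: "snd U \<subseteq> snd N" using allU node_sub[OF U] unfolding Phi_def by blast
  show f: "\<forall>z\<in>fst U. \<exists>x'\<in>fst N. lt le x' z" using allU node_sub[OF U] unfolding Phi_def by blast
  have sub: "node_int P le U \<subseteq> node_int P le N"
  proof
    fix v assume "v \<in> node_int P le U"
    then obtain a b where v: "v \<in> P" "a \<in> fst U" "le a v" "b \<in> snd U" "le v b"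
      unfolding node_int_def up_set_def down_set_def by blast
    obtain x' where x': "x' \<in> fst N" "lt le x' a" using f v(2) by blast
    have P: "x' \<in> P" "a \<in> P" "v \<in> P" using v(1) node_P[OF idx(2,3) U] node_P[OF idx(1,3) N] v(2) x'(1) by blast+
    have "le x' v" using trans[OF P _ v(3)] x'(2) unfolding lt_def by blast
    then show "v \<in> node_int P le N" unfolding node_int_def up_set_def down_set_def
      using v s x'(1) by blast
  qed
  obtain x where x: "x \<in> fst N" using node_sides[OF idx(1,3) ps N] by blast
  obtain y where y: "y \<in> snd N" "lt le x y" using node_sides(1)[OF idx(1,3) ps N] x by blast
  have xP: "x \<in> P" using node_P[OF idx(1,3) N] x by blast
  have xin: "x \<in> node_int P le N" unfolding node_int_def up_set_def down_set_def
    using x y xP refl[OF xP] unfolding lt_def by blast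
  have xnot: "x \<notin> node_int P le U"
  proof
    assume "x \<in> node_int P le U"
    then obtain b where b: "b \<in> fst U" "le b x" unfolding node_int_def up_set_def by blast
    have bm: "b \<in> A m" using b node_sub[OF U] by blast
    have "x \<in> A p" using x node_sub[OF N] by blast
    then show False using not_below[OF idx(1,2) ls(1) bm \<open>x \<in> A p\<close>] b(2) by blast
  qed
  show "node_int P le U \<subset> node_int P le N" using sub xin xnot by blast
qed

end


context RP begin

lemma consec_D: "consecutive P le A t p s \<Longrightarrow> p \<in> {1..t} \<and> s \<in> {1..t} \<and> Ls p s"
  unfolding consecutive_def by blast

lemma consec_no: "consecutive P le A t p s \<Longrightarrow> q \<in> {1..t} \<Longrightarrow> Ls p q \<Longrightarrow> Ls q s \<Longrightarrow> False"
  unfolding consecutive_def by blast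

lemma consec_split:
  assumes "consecutive P le A (t-1) p s" "Ls p t" "Ls t s" "1 \<le> t"
  shows "consecutive P le A t p t" "consecutive P le A t t s"
proof -
  have d: "p \<in> {1..t-1}" "s \<in> {1..t-1}" using consec_D[OF assms(1)] by blast+
  show "consecutive P le A t p t" unfolding consecutive_def
  proof (intro conjI)
    show "p \<in> {1..t}" "t \<in> {1..t}" using d assms(4) by auto
    show "Ls p t" by fact
    show "\<not> (\<exists>q\<in>{1..t}. Ls p q \<and> Ls q t)"
    proof
      assume "\<exists>q\<in>{1..t}. Ls p q \<and> Ls q t"
      then obtain q where q: "q \<in> {1..t}" "Ls p q" "Ls q t" by blast
      have "q \<noteq> t" using q acless_irrefl by blast
      then have "q \<in> {1..t-1}" using q by auto
      moreover have "Ls q s" using acless_trans q(3) assms(3) by blast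
      ultimately show False using consec_no[OF assms(1)] q(2) by blast
    qed
  qed
  show "consecutive P le A t t s" unfolding consecutive_def
  proof (intro conjI)
    show "t \<in> {1..t}" "s \<in> {1..t}" using d assms(4) by auto
    show "Ls t s" by fact
    show "\<not> (\<exists>q\<in>{1..t}. Ls t q \<and> Ls q s)"
    proof
      assume "\<exists>q\<in>{1..t}. Ls t q \<and> Ls q s"
      then obtain q where q: "q \<in> {1..t}" "Ls t q" "Ls q s" by blast
      have "q \<noteq> t" using q acless_irrefl by blast
      then have "q \<in> {1..t-1}" using q by auto
      moreover have "Ls p q" using acless_trans q(2) assms(2) by blast
      ultimately show False using consec_no[OF assms(1)] q(3) by blast
    qed
  qed
qed

lemma consec_down:
  assumes "consecutive P le A t p s" "p \<noteq> t" "s \<noteq> t"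
  shows "consecutive P le A (t-1) p s"
  using assms unfolding consecutive_def by auto

lemma consec_idx: "consecutive P le A t p s \<Longrightarrow> t \<le> k \<Longrightarrow> p \<in> {1..k} \<and> s \<in> {1..k}"
  using consec_D by fastforce

lemma child_cls:
  assumes "node_child P le A k M N"
    and t: "t \<in> {3..k}" "consecutive P le A (t-1) p s" "Ls p t" "Ls t s" "node_of le (A p) (A s) N"
  shows "(node_of le (A p) (A t) M \<or> node_of le (A t) (A s) M) \<and> node_int P le M \<subset> node_int P le N"
proof -
  obtain t' p' s' where t': "t' \<in> {3..k}" "consecutive P le A (t'-1) p' s'" "Ls p' t'" "Ls t' s'"
    "node_of le (A p') (A s') N" "node_of le (A p') (A t') M \<or> node_of le (A t') (A s') M"
    "node_int P le M \<subset> node_int P le N"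
    using assms(1) unfolding node_child_def by blast
  have i1: "p \<in> {1..k}" "s \<in> {1..k}" using consec_idx[OF t(2)] t(1) by auto
  have i2: "p' \<in> {1..k}" "s' \<in> {1..k}" using consec_idx[OF t'(2)] t'(1) by auto
  have ps: "Ls p s" "Ls p' s'" using consec_D t(2) t'(2) by blast+
  obtain x where x: "x \<in> fst N" using node_sides(3)[OF i1 ps(1) t(5)] by blast
  obtain y where y: "y \<in> snd N" using node_sides(4)[OF i1 ps(1) t(5)] by blast
  have "p = p'" using Aidx[OF i1(1) i2(1)] x node_sub[OF t(5)] node_sub[OF t'(5)] by blast
  moreover have "s = s'" using Aidx[OF i1(2) i2(2)] y node_sub[OF t(5)] node_sub[OF t'(5)] by blast
  moreover have "t = t'"
  proof (rule ccontr)
    assume "t \<noteq> t'"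
    then consider "t < t'" | "t' < t" by linarith
    then show False
    proof cases
      case 1
      then have "t \<in> {1..t'-1}" using t(1) by auto
      then show False using consec_no[OF t'(2)] t(3,4) \<open>p = p'\<close> \<open>s = s'\<close> by blast
    next
      case 2
      then have "t' \<in> {1..t-1}" using t'(1) by auto
      then show False using consec_no[OF t(2)] t'(3,4) \<open>p = p'\<close> \<open>s = s'\<close> by blast
    qed
  qed
  ultimately show ?thesis using t' by blast
qed

lemma is_node_D:
  assumes "is_node P le A k N"
  obtains t p s where "t \<in> {2..k}" "consecutive P le A t p s" "node_of le (A p) (A s) N"
    "p \<in> {1..k}" "s \<in> {1..k}" "Ls p s"
  using assms consec_idx consec_D unfolding is_node_def by fastforce

lemma is_node_P: "is_node P le A k N \<Longrightarrow> fst N \<subseteq> P \<and> snd N \<subseteq> P"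
  using is_node_D node_P by metis

lemma is_node_pm:
  assumes "is_node P le A k N"
  shows "\<exists>f. bij_betw f (fst N) (snd N) \<and> (\<forall>x\<in>fst N. lt le x (f x))"
proof -
  obtain t p s where t: "t \<in> {2..k}" "consecutive P le A t p s" "node_of le (A p) (A s) N"
    "p \<in> {1..k}" "s \<in> {1..k}" "Ls p s" using is_node_D[OF assms] by blast
  have reg: "regular_bip le (A p) (A s)" using regs t(1,2) by blast
  obtain x where x: "x \<in> fst N" using node_sides(3)[OF t(4,5,6,3)] by blast
  obtain y where y: "y \<in> snd N" "lt le x y" using node_sides(1)[OF t(4,5,6,3)] x by blast
  obtain F where F: "perfect_matching le (A p) (A s) F"
    using reg x y node_sub[OF t(3)] unfolding regular_bip_def by blast
  have Fb: "bij_betw F (A p) (A s)" and Fl: "\<forall>x\<in>A p. lt le x (F x)"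
    using F unfolding perfect_matching_def by blast+
  have "F ` fst N = snd N"
  proof
    show "F ` fst N \<subseteq> snd N"
    proof
      fix z assume "z \<in> F ` fst N"
      then obtain a where a: "a \<in> fst N" "z = F a" by blast
      have "a \<in> A p" using a node_sub[OF t(3)] by blast
      then have "F a \<in> A s" "lt le a (F a)" using Fb Fl unfolding bij_betw_def by blast+
      then show "z \<in> snd N" using node_right[OF t(4,5,6,3) a(1)] a(2) by blast
    qed
    show "snd N \<subseteq> F ` fst N"
    proof
      fix z assume z: "z \<in> snd N"
      then have "z \<in> A s" using node_sub[OF t(3)] by blast
      then obtain a where a: "a \<in> A p" "z = F a" using Fb unfolding bij_betw_def by blast
      then have "a \<in> fst N" using node_left[OF t(4,5,6,3) z a(1)] Fl by blast
      then show "z \<in> F ` fst N" using a by blast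
    qed
  qed
  moreover have "inj_on F (fst N)" using Fb node_sub[OF t(3)] unfolding bij_betw_def
    using inj_on_subset by blast
  ultimately have "bij_betw F (fst N) (snd N)" unfolding bij_betw_def by blast
  moreover have "\<forall>x\<in>fst N. lt le x (F x)" using Fl node_sub[OF t(3)] by blast
  ultimately show ?thesis by blast
qed

definition "R0 = (A 1, A 2)"

lemma idx12: "1 \<in> {1..k}" "2 \<in> {1..k}" using k2 by auto

lemma Ls12: "Ls 1 2"
proof -
  have "ac_le P le (A 1) (A 2)" using bnd idx12 by blast
  moreover have "A 1 \<noteq> A 2"
  proof
    assume "A 1 = A 2"
    then have "(1::nat) = 2" using Aeq[OF idx12] by blast
    then show False by simp
  qed
  ultimately show ?thesis unfolding ac_less_def by blast
qed

lemma root_node: "node_of le (A 1) (A 2) R0"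
proof -
  have d: "A 1 \<inter> A 2 = {}" using disj0[OF idx12] by simp
  have e: "bip_edge le (A 1) (A 2) a b" if "a \<in> A 1" "b \<in> A 2" for a b
    using compl that unfolding bip_edge_def by blast
  have e': "bip_edge le (A 1) (A 2) b a" if "a \<in> A 1" "b \<in> A 2" for a b
    using e that edge_sym by metis
  obtain a0 where a0: "a0 \<in> A 1" using Ane idx12 by blast
  obtain b0 where b0: "b0 \<in> A 2" using Ane idx12 by blast
  have conn: "(bip_edge le (A 1) (A 2))\<^sup>*\<^sup>* x y" if hxy: "x \<in> A 1 \<union> A 2" "y \<in> A 1 \<union> A 2" for x y
  proof -
    consider "x \<in> A 1" "y \<in> A 1" | "x \<in> A 1" "y \<in> A 2" | "x \<in> A 2" "y \<in> A 1" | "x \<in> A 2" "y \<in> A 2"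
      using hxy by blast
    then show ?thesis
    proof cases
      case 1
      have "(bip_edge le (A 1) (A 2))\<^sup>*\<^sup>* b0 y" using e'[OF 1(2) b0] by (rule r_into_rtranclp)
      then show ?thesis using e[OF 1(1) b0] by (rule converse_rtranclp_into_rtranclp[rotated])
    next
      case 2 then show ?thesis using e by blast
    next
      case 3 then show ?thesis using e' by blast
    next
      case 4
      have "(bip_edge le (A 1) (A 2))\<^sup>*\<^sup>* a0 y" using e[OF a0 4(2)] by (rule r_into_rtranclp)
      then show ?thesis using e'[OF a0 4(1)] by (rule converse_rtranclp_into_rtranclp[rotated])
    qed
  qed
  have cl: "\<forall>x\<in>A 1 \<union> A 2. \<forall>y. bip_edge le (A 1) (A 2) x y \<longrightarrow> y \<in> A 1 \<union> A 2"
    unfolding bip_edge_def by blast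
  have "bip_component le (A 1) (A 2) (A 1 \<union> A 2)"
    unfolding bip_component_def using a0 conn cl by blast
  then show ?thesis unfolding node_of_def R0_def by simp
qed

lemma root_is_node: "is_node P le A k R0"
proof -
  have q: "q = 1 \<or> q = 2" if "q \<in> {1..2}" for q :: nat using that by auto
  have "\<not> (\<exists>q\<in>{1..2}. Ls 1 q \<and> Ls q 2)"
  proof
    assume "\<exists>q\<in>{1..2}. Ls 1 q \<and> Ls q 2"
    then obtain q where "q \<in> {1..2}" "Ls 1 q" "Ls q 2" by blast
    then show False using q acless_irrefl by metis
  qed
  moreover have "(1::nat) \<in> {1..2}" "(2::nat) \<in> {1..2}" by auto
  ultimately have "consecutive P le A 2 1 2" unfolding consecutive_def using Ls12 by blast
  moreover have "(2::nat) \<in> {2..k}" using k2 by auto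
  ultimately show ?thesis unfolding is_node_def using root_node by blast
qed

lemma down_mono:
  assumes "i \<in> {1..k}" "j \<in> {1..k}" "Ls i j"
  shows "card (down_set P le (A i)) < card (down_set P le (A j))"
proof -
  have ij: "ac_le P le (A i) (A j)" using assms(3) unfolding ac_less_def by blast
  have sub: "down_set P le (A i) \<subseteq> down_set P le (A j)"
  proof
    fix z assume "z \<in> down_set P le (A i)"
    then obtain a where a: "z \<in> P" "a \<in> A i" "le z a" unfolding down_set_def by blast
    obtain b where b: "b \<in> A j" "le a b" using acle_down[OF ij a(2)] by blast
    have "le z b" using trans[OF a(1) _ _ a(3) b(2)] Asub assms a b by blast
    then show "z \<in> down_set P le (A j)" unfolding down_set_def using a b by blast
  qed
  have "\<not> A j \<subseteq> down_set P le (A i)"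
  proof
    assume "A j \<subseteq> down_set P le (A i)"
    then have "ac_le P le (A j) (A i)" using maxl assms unfolding ac_le_def by blast
    then show False using acless_asym assms(3) by blast
  qed
  then obtain y where y: "y \<in> A j" "y \<notin> down_set P le (A i)" by blast
  have "y \<in> down_set P le (A j)" unfolding down_set_def using y Asub assms refl by blast
  then have "down_set P le (A i) \<subset> down_set P le (A j)" using sub y by blast
  moreover have "finite (down_set P le (A j))" using finP unfolding down_set_def by simp
  ultimately show ?thesis by (simp add: psubset_card_mono)
qed

lemma down_le: "card (down_set P le X) \<le> card P"
  using finP unfolding down_set_def by (simp add: card_mono)

end


context RP begin

lemma cnode_fst: "x \<in> X \<Longrightarrow> x \<in> fst (cnode le X Y x)"
  by (simp add: cnode_def compo_def)
lemma cnode_snd: "x \<in> Y \<Longrightarrow> x \<in> snd (cnode le X Y x)"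
  by (simp add: cnode_def compo_def)

lemma mk_child:
  assumes "t \<in> {3..k}" "consecutive P le A (t-1) p s" "Ls p t" "Ls t s" "node_of le (A p) (A s) N"
    "node_of le (A p) (A t) M \<or> node_of le (A t) (A s) M" "node_int P le M \<subset> node_int P le N"
  shows "node_child P le A k M N"
  unfolding node_child_def using assms by blast

lemma to_root:
  "t \<in> {2..k} \<Longrightarrow> consecutive P le A t p s \<Longrightarrow> node_of le (A p) (A s) K
   \<Longrightarrow> (node_child P le A k)\<^sup>*\<^sup>* K R0"
proof (induction t arbitrary: p s K rule: less_induct)
  case (less t)
  have pt: "p \<in> {1..t}" "s \<in> {1..t}" "Ls p s" using consec_D[OF less.prems(2)] by blast+
  have tk: "t \<le> k" "2 \<le> t" using less.prems(1) by auto
  have idx: "p \<in> {1..k}" "s \<in> {1..k}" "t \<in> {1..k}" using pt tk by auto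
  consider "t = 2" | "3 \<le> t" using tk by linarith
  then show ?case
  proof cases
    case 1
    have p12: "p = 1 \<or> p = 2" "s = 1 \<or> s = 2" using pt 1 by auto
    have ps: "p \<noteq> s" using pt(3) acless_irrefl by blast
    have n21: "\<not> Ls 2 1" using Ls12 acless_asym unfolding ac_less_def by blast
    have "p = 1" "s = 2" using p12 ps n21 pt(3) by auto
    then have K: "node_of le (A 1) (A 2) K" using less.prems(3) by simp
    obtain x where x: "x \<in> fst K" using node_sides(3)[OF idx12 Ls12 K] by blast
    have d: "A 1 \<inter> A 2 = {}" using disj0[OF idx12] by simp
    have "x \<in> A 1" using x node_sub(1)[OF K] by blast
    then have "x \<in> fst R0" unfolding R0_def by simp
    then have "K = R0" using node_eq[OF d K root_node] x by blast
    then show ?thesis by simp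
  next
    case 2
    have t3: "t \<in> {3..k}" using 2 tk by auto
    have tm: "t - 1 < t" "t - 1 \<in> {2..k}" using 2 tk by auto
    consider "p \<noteq> t" "s \<noteq> t" | "s = t" | "p = t" by blast
    then show ?thesis
    proof cases
      case 1
      have c: "consecutive P le A (t-1) p s" using consec_down[OF less.prems(2) 1] .
      show ?thesis using less.IH[OF tm c less.prems(3)] .
    next
      case st: 2
      have Lpt: "Ls p t" using pt(3) st by simp
      have pnt: "p \<noteq> t" using Lpt acless_irrefl by blast
      define Q where "Q = {q. q \<in> {1..t-1} \<and> Ls t q}"
      have "2 \<in> Q"
      proof -
        have "ac_le P le (A t) (A 2)" using bnd idx(3) by blast
        moreover have "A t \<noteq> A 2" using Aeq[OF idx(3) idx12(2)] 2 by auto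
        ultimately show ?thesis unfolding Q_def ac_less_def using 2 by auto
      qed
      then obtain s0 where s0: "s0 \<in> Q" and mn: "\<forall>q. q \<in> Q \<longrightarrow> card (down_set P le (A s0)) \<le> card (down_set P le (A q))"
        using ex_has_least_nat[of "\<lambda>q. q \<in> Q" 2 "\<lambda>q. card (down_set P le (A q))"] by blast
      have s0i: "s0 \<in> {1..t-1}" "Ls t s0" using s0 unfolding Q_def by blast+
      have s0k: "s0 \<in> {1..k}" using s0i tk by auto
      have Lps0: "Ls p s0" using acless_trans Lpt s0i(2) by blast
      have c: "consecutive P le A (t-1) p s0" unfolding consecutive_def
      proof (intro conjI)
        show "p \<in> {1..t-1}" using pt pnt by auto
        show "s0 \<in> {1..t-1}" by fact
        show "Ls p s0" by fact
        show "\<not> (\<exists>q\<in>{1..t-1}. Ls p q \<and> Ls q s0)"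
        proof
          assume "\<exists>q\<in>{1..t-1}. Ls p q \<and> Ls q s0"
          then obtain q where q: "q \<in> {1..t-1}" "Ls p q" "Ls q s0" by blast
          have qk: "q \<in> {1..k}" "q \<noteq> t" using q tk by auto
          have qt: "A q \<noteq> A t" using Aeq[OF qk(1) idx(3)] qk(2) by blast
          consider "ac_le P le (A q) (A t)" | "ac_le P le (A t) (A q)" using lin[OF qk(1) idx(3)] by blast
          then show False
          proof cases
            case 1
            then have "Ls q t" using qt unfolding ac_less_def by blast
            moreover have "q \<in> {1..t}" using q by auto
            ultimately show False using consec_no[OF less.prems(2)] q(2) st by blast
          next
            case 2
            then have "q \<in> Q" using qt q(1) unfolding Q_def ac_less_def by auto
            then have "card (down_set P le (A s0)) \<le> card (down_set P le (A q))" using mn by blast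
            moreover have "card (down_set P le (A q)) < card (down_set P le (A s0))"
              using down_mono[OF qk(1) s0k q(3)] .
            ultimately show False by linarith
          qed
        qed
      qed
      have K: "node_of le (A p) (A t) K" using less.prems(3) st by simp
      obtain x where x: "x \<in> fst K" using node_sides(3)[OF idx(1,3) Lpt K] by blast
      have xp: "x \<in> A p" using x node_sub[OF K] by blast
      have d: "A p \<inter> A s0 = {}" using idx_lt_disj[OF idx(1) s0k Lps0] by blast
      define N0 where "N0 = cnode le (A p) (A s0) x"
      have N0: "node_of le (A p) (A s0) N0" unfolding N0_def using cnode_node(1)[OF d] xp by blast
      have xN0: "x \<in> fst N0" unfolding N0_def using cnode_fst[OF xp] .
      have sub: "node_int P le K \<subset> node_int P le N0"
        using lower_child(4)[OF idx(1,3) s0k Lpt s0i(2) N0 K x xN0] .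
      have ch: "node_child P le A k K N0" using mk_child[OF t3 c Lpt s0i(2) N0 _ sub] K by blast
      have "(node_child P le A k)\<^sup>*\<^sup>* N0 R0"
        using less.IH[OF tm c N0] .
      then show ?thesis using ch by (rule converse_rtranclp_into_rtranclp[rotated])
    next
      case pt': 3
      have Lts: "Ls t s" using pt(3) pt' by simp
      have snt: "s \<noteq> t" using Lts acless_irrefl by blast
      define Q where "Q = {q. q \<in> {1..t-1} \<and> Ls q t}"
      have "1 \<in> Q"
      proof -
        have "ac_le P le (A 1) (A t)" using bnd idx(3) by blast
        moreover have "A 1 \<noteq> A t" using Aeq[OF idx12(1) idx(3)] 2 by auto
        ultimately show ?thesis unfolding Q_def ac_less_def using 2 by auto
      qed
      then obtain p0 where p0: "p0 \<in> Q" and mn: "\<forall>q. q \<in> Q \<longrightarrow> card P - card (down_set P le (A p0)) \<le> card P - card (down_set P le (A q))"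
        using ex_has_least_nat[of "\<lambda>q. q \<in> Q" 1 "\<lambda>q. card P - card (down_set P le (A q))"] by blast
      have p0i: "p0 \<in> {1..t-1}" "Ls p0 t" using p0 unfolding Q_def by blast+
      have p0k: "p0 \<in> {1..k}" using p0i tk by auto
      have Lp0s: "Ls p0 s" using acless_trans Lts p0i(2) by blast
      have c: "consecutive P le A (t-1) p0 s" unfolding consecutive_def
      proof (intro conjI)
        show "s \<in> {1..t-1}" using pt snt by auto
        show "p0 \<in> {1..t-1}" by fact
        show "Ls p0 s" by fact
        show "\<not> (\<exists>q\<in>{1..t-1}. Ls p0 q \<and> Ls q s)"
        proof
          assume "\<exists>q\<in>{1..t-1}. Ls p0 q \<and> Ls q s"
          then obtain q where q: "q \<in> {1..t-1}" "Ls p0 q" "Ls q s" by blast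
          have qk: "q \<in> {1..k}" "q \<noteq> t" using q tk by auto
          have qt: "A q \<noteq> A t" using Aeq[OF qk(1) idx(3)] qk(2) by blast
          consider "ac_le P le (A q) (A t)" | "ac_le P le (A t) (A q)" using lin[OF qk(1) idx(3)] by blast
          then show False
          proof cases
            case 2
            then have "Ls t q" using qt unfolding ac_less_def by blast
            moreover have "q \<in> {1..t}" using q by auto
            ultimately show False using consec_no[OF less.prems(2)] q(3) pt' by blast
          next
            case 1
            then have "q \<in> Q" using qt q(1) unfolding Q_def ac_less_def by auto
            then have "card P - card (down_set P le (A p0)) \<le> card P - card (down_set P le (A q))" using mn by blast
            moreover have "card (down_set P le (A p0)) < card (down_set P le (A q))"
              using down_mono[OF p0k qk(1) q(2)] .
            moreover have "card (down_set P le (A q)) \<le> card P" using down_le .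
            ultimately show False by linarith
          qed
        qed
      qed
      have K: "node_of le (A t) (A s) K" using less.prems(3) pt' by simp
      obtain y where y: "y \<in> snd K" using node_sides(4)[OF idx(3,2) Lts K] by blast
      have ys: "y \<in> A s" using y node_sub[OF K] by blast
      have d: "A p0 \<inter> A s = {}" using idx_lt_disj[OF p0k idx(2) Lp0s] by blast
      define N0 where "N0 = cnode le (A p0) (A s) y"
      have N0: "node_of le (A p0) (A s) N0" unfolding N0_def using cnode_node(1)[OF d] ys by blast
      have yN0: "y \<in> snd N0" unfolding N0_def using cnode_snd[OF ys] .
      have sub: "node_int P le K \<subset> node_int P le N0"
        using upper_child(3)[OF p0k idx(3,2) p0i(2) Lts N0 K y yN0] .
      have ch: "node_child P le A k K N0" using mk_child[OF t3 c p0i(2) Lts N0 _ sub] K by blast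
      have "(node_child P le A k)\<^sup>*\<^sup>* N0 R0"
        using less.IH[OF tm c N0] .
      then show ?thesis using ch by (rule converse_rtranclp_into_rtranclp[rotated])
    qed
  qed
qed

lemma node_to_root: "is_node P le A k K \<Longrightarrow> (node_child P le A k)\<^sup>*\<^sup>* K R0"
  unfolding is_node_def using to_root by blast

end


context RP begin

lemma lower_in:
  assumes "p \<in> {1..k}" "t \<in> {1..k}" "s \<in> {1..k}" "Ls p t" "Ls p s"
    "node_of le (A p) (A t) L" "node_of le (A p) (A s) N" "node_int P le L \<subseteq> node_int P le N"
  shows "fst L \<subseteq> fst N"
proof
  fix x assume x: "x \<in> fst L"
  obtain y where y: "y \<in> snd L" "lt le x y" using node_sides(1)[OF assms(1,2,4,6)] x by blast
  have xP: "x \<in> P" using node_P[OF assms(1,2,6)] x by blast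
  have "x \<in> node_int P le L" unfolding node_int_def up_set_def down_set_def
    using x y xP refl[OF xP] unfolding lt_def by blast
  then have "x \<in> node_int P le N" using assms(8) by blast
  then obtain x' where x': "x' \<in> fst N" "le x' x" unfolding node_int_def up_set_def by blast
  have "x' = x" using Aanti[OF assms(1) _ _ x'(2)] x' x node_sub[OF assms(6)] node_sub[OF assms(7)] by blast
  then show "x \<in> fst N" using x' by blast
qed

lemma upper_in:
  assumes "p \<in> {1..k}" "t \<in> {1..k}" "s \<in> {1..k}" "Ls t s" "Ls p s"
    "node_of le (A t) (A s) U" "node_of le (A p) (A s) N" "node_int P le U \<subseteq> node_int P le N"
  shows "snd U \<subseteq> snd N"
proof
  fix y assume y: "y \<in> snd U"
  obtain x where x: "x \<in> fst U" "lt le x y" using node_sides(2)[OF assms(2,3,4,6)] y by blast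
  have yP: "y \<in> P" using node_P[OF assms(2,3,6)] y by blast
  have "y \<in> node_int P le U" unfolding node_int_def up_set_def down_set_def
    using x y yP refl[OF yP] unfolding lt_def by blast
  then have "y \<in> node_int P le N" using assms(8) by blast
  then obtain y' where y': "y' \<in> snd N" "le y y'" unfolding node_int_def down_set_def by blast
  have "y = y'" using Aanti[OF assms(3) _ _ y'(2)] y' y node_sub[OF assms(6)] node_sub[OF assms(7)] by blast
  then show "y \<in> snd N" using y' by blast
qed

lemma cnode_nbr:
  assumes "bip_edge le X Y v y" "y \<in> Y"
  shows "y \<in> snd (cnode le X Y v)"
  using assms by (simp add: cnode_def compo_def)

lemma node_disj:
  assumes "i \<in> {1..k}" "j \<in> {1..k}" "Ls i j" "node_of le (A i) (A j) M" "node_of le (A i) (A j) M'"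
    "z \<in> fst M \<inter> fst M' \<or> z \<in> snd M \<inter> snd M'"
  shows "M = M'"
proof -
  have d: "A i \<inter> A j = {}" using idx_lt_disj[OF assms(1-3)] by blast
  show ?thesis using node_eq[OF d assms(4,5), of z] assms(6) by blast
qed

definition UpB :: "('a set \<times> 'a set \<Rightarrow> 'a set) \<Rightarrow> 'a set \<times> 'a set \<Rightarrow> ('a set \<times> 'a set) set \<Rightarrow> 'a set \<Rightarrow> 'a set" where
  "UpB YS N AA B = {y \<in> snd N. (\<exists>b\<in>B. le b y) \<or> (\<exists>K\<in>AA. \<exists>y'\<in>YS K. le y' y)}"

lemma UpB_sub: "UpB YS N AA B \<subseteq> snd N" unfolding UpB_def by blast

lemma node_int_fin: "finite (node_int P le N)"
  using finP unfolding node_int_def up_set_def by simp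

end


context RP begin

lemma main_inv:
  fixes c :: nat and S :: "('a set \<times> 'a set) set" and XS YS :: "'a set \<times> 'a set \<Rightarrow> 'a set"
  assumes S_fin: "finite S"
    and S_node: "\<forall>K\<in>S. is_node P le A k K"
    and S_cl: "\<forall>K\<in>S. XS K \<subseteq> fst K \<and> YS K \<subseteq> snd K \<and> card (YS K) = c \<and>
        (\<exists>f. bij_betw f (fst K) (snd K) \<and> (\<forall>x\<in>fst K. lt le x (f x)) \<and> f ` XS K = YS K)"
    and S_inc: "\<forall>K\<in>S. \<forall>K'\<in>S. K \<noteq> K' \<longrightarrow> (\<forall>y\<in>YS K. \<forall>x\<in>XS K'. \<not> le y x)"
    and S_tree: "\<forall>K\<in>S. \<forall>K'\<in>S. K \<noteq> K' \<longrightarrow> \<not> (node_child P le A k)\<^sup>+\<^sup>+ K K'"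
  shows "is_node P le A k N \<Longrightarrow> AA \<subseteq> S \<Longrightarrow> (\<forall>K\<in>AA. (node_child P le A k)\<^sup>*\<^sup>* K N)
    \<Longrightarrow> B \<subseteq> fst N \<Longrightarrow> (\<forall>b\<in>B. \<forall>K\<in>AA. \<forall>x\<in>XS K. \<not> le b x)
    \<Longrightarrow> card B + c * card AA \<le> card (UpB YS N AA B)"
proof (induction "card (node_int P le N)" arbitrary: N AA B rule: less_induct)
  case less
  note isN = less.prems(1) and AS = less.prems(2) and desc = less.prems(3)
    and BN = less.prems(4) and Bx = less.prems(5)
  have NP: "fst N \<subseteq> P" "snd N \<subseteq> P" using is_node_P[OF isN] by blast+
  have finU: "finite (UpB YS N AA B)" using UpB_sub NP finP finite_subset by metis
  have finB: "finite B" using BN NP finP finite_subset by metis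
  have finAA: "finite AA" using AS S_fin finite_subset by blast
  consider "AA = {}" | "N \<in> AA" | "AA \<noteq> {}" "N \<notin> AA" by blast
  then show ?case
  proof cases
    case 1
    obtain f where f: "bij_betw f (fst N) (snd N)" "\<forall>x\<in>fst N. lt le x (f x)" using is_node_pm[OF isN] by blast
    have "f ` B \<subseteq> UpB YS N AA B"
    proof
      fix y assume "y \<in> f ` B"
      then obtain b where b: "b \<in> B" "y = f b" by blast
      have "y \<in> snd N" using f(1) b BN unfolding bij_betw_def by blast
      moreover have "le b y" using f(2) b BN unfolding lt_def by blast
      ultimately show "y \<in> UpB YS N AA B" unfolding UpB_def using b by blast
    qed
    then have "card (f ` B) \<le> card (UpB YS N AA B)" using card_mono[OF finU] by blast
    moreover have "inj_on f (fst N)" using f(1) unfolding bij_betw_def by blast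
    then have "card (f ` B) = card B" using card_image[OF inj_on_subset[OF _ BN]] by blast
    ultimately show ?thesis using 1 by simp
  next
    case 2
    have AA1: "AA = {N}"
    proof -
      have "K = N" if K: "K \<in> AA" for K
      proof (rule ccontr)
        assume "K \<noteq> N"
        then have "(node_child P le A k)\<^sup>+\<^sup>+ K N" using rtranclpD[of "node_child P le A k" K N] desc K by blast
        then show False using S_tree AS K 2 \<open>K \<noteq> N\<close> by blast
      qed
      then show ?thesis using 2 by blast
    qed
    have NS: "N \<in> S" using 2 AS by blast
    obtain f where f: "bij_betw f (fst N) (snd N)" "\<forall>x\<in>fst N. lt le x (f x)" "f ` XS N = YS N"
      and XY: "XS N \<subseteq> fst N" "YS N \<subseteq> snd N" "card (YS N) = c"
      using bspec[OF S_cl NS] by blast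
    have inj: "inj_on f (fst N)" using f(1) unfolding bij_betw_def by blast
    have sub: "f ` B \<union> YS N \<subseteq> UpB YS N AA B"
    proof
      fix y assume "y \<in> f ` B \<union> YS N"
      then consider "y \<in> f ` B" | "y \<in> YS N" by blast
      then show "y \<in> UpB YS N AA B"
      proof cases
        case 1
        then obtain b where b: "b \<in> B" "y = f b" by blast
        have "y \<in> snd N" using f(1) b BN unfolding bij_betw_def by blast
        moreover have "le b y" using f(2) b BN unfolding lt_def by blast
        ultimately show ?thesis unfolding UpB_def using b by blast
      next
        case 2
        have "y \<in> snd N" "y \<in> P" using 2 XY NP by blast+
        then show ?thesis unfolding UpB_def using 2 \<open>N \<in> AA\<close> refl by blast
      qed
    qed
    have dis: "f ` B \<inter> YS N = {}"
    proof (rule ccontr)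
      assume "f ` B \<inter> YS N \<noteq> {}"
      then obtain b x where bx: "b \<in> B" "x \<in> XS N" "f b = f x" using f(3) by blast
      then have "b = x" using inj BN XY(1) unfolding inj_on_def by blast
      then have "le b x" using refl bx BN NP by blast
      then show False using Bx bx \<open>N \<in> AA\<close> by blast
    qed
    have finY: "finite (YS N)" using XY NP finP finite_subset by metis
    have "card (f ` B \<union> YS N) = card B + c"
      using card_Un_disjoint[OF finite_imageI[OF finB] finY dis] card_image[OF inj_on_subset[OF inj BN]] XY(3)
      by simp
    then show ?thesis using card_mono[OF finU sub] AA1 by simp
  next
    case 3
    then obtain K0 where K0: "K0 \<in> AA" by blast
    have par: "\<exists>M. (node_child P le A k)\<^sup>*\<^sup>* K M \<and> node_child P le A k M N" if K: "K \<in> AA" for K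
    proof -
      have "K \<noteq> N" using K 3 by blast
      moreover have "(node_child P le A k)\<^sup>*\<^sup>* K N" using desc K by blast
      ultimately show ?thesis by (metis rtranclp.cases)
    qed
    obtain M0 where "node_child P le A k M0 N" using par[OF K0] by blast
    then obtain t p s where t: "t \<in> {3..k}" "consecutive P le A (t-1) p s" "Ls p t" "Ls t s"
      "node_of le (A p) (A s) N"
      unfolding node_child_def by blast
    have idx: "p \<in> {1..k}" "s \<in> {1..k}" "t \<in> {1..k}" "t \<in> {2..k}"
      using consec_idx[OF t(2)] t(1) by auto
    have Lps: "Ls p s" using consec_D[OF t(2)] by blast
    have isL: "is_node P le A k L" if "node_of le (A p) (A t) L" for L
    proof -
      have "consecutive P le A t p t" using consec_split(1)[OF t(2,3,4)] t(1) by auto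
      then show ?thesis unfolding is_node_def using idx(4) that by blast
    qed
    have isU: "is_node P le A k U" if "node_of le (A t) (A s) U" for U
    proof -
      have "consecutive P le A t t s" using consec_split(2)[OF t(2,3,4)] t(1) by auto
      then show ?thesis unfolding is_node_def using idx(4) that by blast
    qed
    define g where "g K = (SOME M. (node_child P le A k)\<^sup>*\<^sup>* K M \<and> node_child P le A k M N)" for K
    have gK: "(node_child P le A k)\<^sup>*\<^sup>* K (g K) \<and> node_child P le A k (g K) N" if "K \<in> AA" for K
      unfolding g_def using someI_ex[OF par[OF that]] .
    define LL where "LL = {M. node_child P le A k M N \<and> node_of le (A p) (A t) M}"
    define UU where "UU = {M. node_child P le A k M N \<and> node_of le (A t) (A s) M}"
    have cls: "M \<in> LL \<union> UU" if "node_child P le A k M N" for M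
      using child_cls[OF that t] that unfolding LL_def UU_def by blast
    have LLsub: "node_int P le L \<subset> node_int P le N" if "L \<in> LL" for L
      using child_cls[OF _ t] that unfolding LL_def by blast
    have UUsub: "node_int P le U \<subset> node_int P le N" if "U \<in> UU" for U
      using child_cls[OF _ t] that unfolding UU_def by blast
    have finPP: "finite (Pow P \<times> Pow P)" using finP by simp
    have finLL: "finite LL"
    proof (rule finite_subset[OF _ finPP])
      show "LL \<subseteq> Pow P \<times> Pow P" unfolding LL_def using node_P[OF idx(1,3)] by fastforce
    qed
    have finUU: "finite UU"
    proof (rule finite_subset[OF _ finPP])
      show "UU \<subseteq> Pow P \<times> Pow P" unfolding UU_def using node_P[OF idx(3,2)] by fastforce
    qed
    have LUdis: "LL \<inter> UU = {}"
    proof (rule ccontr)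
      assume "LL \<inter> UU \<noteq> {}"
      then obtain M where M: "node_of le (A p) (A t) M" "node_of le (A t) (A s) M"
        unfolding LL_def UU_def by blast
      obtain x where "x \<in> fst M" using node_sides(3)[OF idx(1,3) t(3) M(1)] by blast
      then show False using node_sub(1)[OF M(1)] node_sub(1)[OF M(2)] idx_lt_disj(2)[OF idx(1,3) t(3)] by blast
    qed
    define AM where "AM M = {K \<in> AA. g K = M}" for M
    have gLU: "g K \<in> LL \<union> UU" if "K \<in> AA" for K using cls gK that by blast
    have cardAA: "card AA = (\<Sum>M\<in>LL. card (AM M)) + (\<Sum>M\<in>UU. card (AM M))"
    proof -
      have "AA = (\<Union>M\<in>LL \<union> UU. AM M)" unfolding AM_def using gLU by blast
      moreover have "card (\<Union>M\<in>LL \<union> UU. AM M) = (\<Sum>M\<in>LL \<union> UU. card (AM M))"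
        by (rule card_UN_disjoint) (use finLL finUU finAA in \<open>auto simp: AM_def\<close>)
      moreover have "(\<Sum>M\<in>LL \<union> UU. card (AM M)) = (\<Sum>M\<in>LL. card (AM M)) + (\<Sum>M\<in>UU. card (AM M))"
        by (rule sum.union_disjoint[OF finLL finUU LUdis])
      ultimately show ?thesis by simp
    qed
    have AMS: "AM M \<subseteq> S" for M using AS unfolding AM_def by blast
    have AMd: "\<forall>K\<in>AM M. (node_child P le A k)\<^sup>*\<^sup>* K M" for M using gK unfolding AM_def by blast
    define WL where "WL L = UpB YS L (AM L) (B \<inter> fst L)" for L
    define W where "W = (\<Union>L\<in>LL. WL L)"
    have IHL: "card (B \<inter> fst L) + c * card (AM L) \<le> card (WL L)" if L: "L \<in> LL" for L
    proof -
      have nL: "node_of le (A p) (A t) L" using L unfolding LL_def by blast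
      have "card (node_int P le L) < card (node_int P le N)"
        using psubset_card_mono[OF node_int_fin LLsub[OF L]] .
      moreover have "\<forall>b\<in>B \<inter> fst L. \<forall>K\<in>AM L. \<forall>x\<in>XS K. \<not> le b x" using Bx unfolding AM_def by blast
      ultimately show ?thesis unfolding WL_def
        using less.hyps[OF _ isL[OF nL] AMS AMd, of "B \<inter> fst L"] by blast
    qed
    have WLsub: "WL L \<subseteq> snd L" for L unfolding WL_def using UpB_sub .
    have LLnode: "node_of le (A p) (A t) L" if "L \<in> LL" for L using that unfolding LL_def by blast
    have UUnode: "node_of le (A t) (A s) U" if "U \<in> UU" for U using that unfolding UU_def by blast
    have LLfst: "fst L \<subseteq> fst N" if "L \<in> LL" for L
      using lower_in[OF idx(1,3,2) t(3) Lps LLnode[OF that] t(5)] LLsub[OF that] by blast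
    have UUsnd: "snd U \<subseteq> snd N" if "U \<in> UU" for U
      using upper_in[OF idx(1,3,2) t(4) Lps UUnode[OF that] t(5)] UUsub[OF that] by blast
    have finWL: "finite (WL L)" if "L \<in> LL" for L
      using WLsub node_P[OF idx(1,3) LLnode[OF that]] finP finite_subset by metis
    have cardW: "card W = (\<Sum>L\<in>LL. card (WL L))"
      unfolding W_def
    proof (rule card_UN_disjoint[OF finLL])
      show "\<forall>L\<in>LL. finite (WL L)" using finWL by blast
      show "\<forall>L\<in>LL. \<forall>L'\<in>LL. L \<noteq> L' \<longrightarrow> WL L \<inter> WL L' = {}"
      proof (intro ballI impI)
        fix L L' assume h: "L \<in> LL" "L' \<in> LL" "L \<noteq> L'"
        show "WL L \<inter> WL L' = {}"
        proof (rule ccontr)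
          assume "WL L \<inter> WL L' \<noteq> {}"
          then obtain z where "z \<in> snd L" "z \<in> snd L'" using WLsub by blast
          then have "L = L'" using node_disj[OF idx(1,3) t(3) LLnode[OF h(1)] LLnode[OF h(2)]] by blast
          then show False using h(3) by blast
        qed
      qed
    qed
    have Bcov: "B = (\<Union>L\<in>LL. B \<inter> fst L)"
    proof
      show "B \<subseteq> (\<Union>L\<in>LL. B \<inter> fst L)"
      proof
        fix b assume b: "b \<in> B"
        have bp: "b \<in> A p" using b BN node_sub[OF t(5)] by blast
        have d: "A p \<inter> A t = {}" using idx_lt_disj(2)[OF idx(1,3) t(3)] .
        define Lb where "Lb = cnode le (A p) (A t) b"
        have nL: "node_of le (A p) (A t) Lb" unfolding Lb_def using cnode_node(1)[OF d] bp by blast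
        have bL: "b \<in> fst Lb" unfolding Lb_def using cnode_fst[OF bp] .
        have "node_int P le Lb \<subset> node_int P le N"
          using lower_child(4)[OF idx(1,3,2) t(3,4,5) nL bL] b BN by blast
        then have "node_child P le A k Lb N" using mk_child[OF t(1,2,3,4,5) _] nL by blast
        then have "Lb \<in> LL" unfolding LL_def using nL by blast
        then show "b \<in> (\<Union>L\<in>LL. B \<inter> fst L)" using b bL by blast
      qed
    qed blast
    have cardB: "card B = (\<Sum>L\<in>LL. card (B \<inter> fst L))"
    proof -
      have "card (\<Union>L\<in>LL. B \<inter> fst L) = (\<Sum>L\<in>LL. card (B \<inter> fst L))"
      proof (rule card_UN_disjoint[OF finLL])
        show "\<forall>L\<in>LL. finite (B \<inter> fst L)" using finB by blast
        show "\<forall>L\<in>LL. \<forall>L'\<in>LL. L \<noteq> L' \<longrightarrow> (B \<inter> fst L) \<inter> (B \<inter> fst L') = {}"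
        proof (intro ballI impI)
          fix L L' assume h: "L \<in> LL" "L' \<in> LL" "L \<noteq> L'"
          show "(B \<inter> fst L) \<inter> (B \<inter> fst L') = {}"
          proof (rule ccontr)
            assume "(B \<inter> fst L) \<inter> (B \<inter> fst L') \<noteq> {}"
            then obtain z where "z \<in> fst L" "z \<in> fst L'" by blast
            then have "L = L'" using node_disj[OF idx(1,3) t(3) LLnode[OF h(1)] LLnode[OF h(2)]] by blast
            then show False using h(3) by blast
          qed
        qed
      qed
      then show ?thesis using Bcov by simp
    qed
    have step1: "card B + c * (\<Sum>M\<in>LL. card (AM M)) \<le> card W"
    proof -
      have "card B + c * (\<Sum>M\<in>LL. card (AM M)) = (\<Sum>L\<in>LL. card (B \<inter> fst L) + c * card (AM L))"
        using cardB by (simp add: sum.distrib sum_distrib_left)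
      also have "\<dots> \<le> (\<Sum>L\<in>LL. card (WL L))" using IHL by (rule sum_mono)
      finally show ?thesis using cardW by simp
    qed
    have inP: "fst K \<subseteq> P \<and> snd K \<subseteq> P" if "K \<in> S" for K using is_node_P S_node that by blast
    have XSP: "XS K \<subseteq> P" "YS K \<subseteq> P" if "K \<in> S" for K using S_cl inP that by blast+
    have BP: "B \<subseteq> P" using BN NP by blast
    define WU where "WU U = UpB YS U (AM U) (W \<inter> fst U)" for U
    have WLP: "WL L \<subseteq> P" if "L \<in> LL" for L using WLsub node_P[OF idx(1,3) LLnode[OF that]] by blast
    have Wcond: "\<forall>b\<in>W \<inter> fst U. \<forall>K\<in>AM U. \<forall>x\<in>XS K. \<not> le b x" if U: "U \<in> UU" for U
    proof (intro ballI notI)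
      fix b K x assume b: "b \<in> W \<inter> fst U" and K: "K \<in> AM U" and x: "x \<in> XS K" and bx: "le b x"
      from b obtain L where L: "L \<in> LL" "b \<in> WL L" unfolding W_def by blast
      have bP: "b \<in> P" using WLP L by blast
      have KA: "K \<in> AA" "g K = U" using K unfolding AM_def by blast+
      have KS: "K \<in> S" using KA AS by blast
      have xP: "x \<in> P" using XSP(1)[OF KS] x by blast
      from L(2) consider (a) b0 where "b0 \<in> B" "le b0 b" | (b) K' y' where "K' \<in> AM L" "y' \<in> YS K'" "le y' b"
        unfolding WL_def UpB_def by blast
      then show False
      proof cases
        case a
        have "le b0 x" using trans[OF _ bP xP a(2) bx] a(1) BP by blast
        then show False using Bx a(1) KA(1) x by blast
      next
        case b
        have K'S: "K' \<in> S" "K' \<in> AA" "g K' = L" using b(1) AS unfolding AM_def by blast+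
        have y'P: "y' \<in> P" using XSP(2)[OF K'S(1)] b(2) by blast
        have "le y' x" using trans[OF y'P bP xP b(3) bx] .
        moreover have "K' \<noteq> K" using K'S(3) KA(2) L(1) U LUdis by blast
        ultimately show False using S_inc K'S(1) KS b(2) x by blast
      qed
    qed
    have IHU: "card (W \<inter> fst U) + c * card (AM U) \<le> card (WU U)" if U: "U \<in> UU" for U
    proof -
      have nU: "node_of le (A t) (A s) U" using UUnode[OF U] .
      have "card (node_int P le U) < card (node_int P le N)"
        using psubset_card_mono[OF node_int_fin UUsub[OF U]] .
      then show ?thesis unfolding WU_def
        using less.hyps[OF _ isU[OF nU] AMS AMd, of "W \<inter> fst U"] Wcond[OF U] by blast
    qed
    have WUsub: "WU U \<subseteq> snd U" for U unfolding WU_def using UpB_sub .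
    have finWU: "finite (WU U)" if "U \<in> UU" for U
      using WUsub node_P[OF idx(3,2) UUnode[OF that]] finP finite_subset by metis
    have finW: "finite W" unfolding W_def using finLL finWL by blast
    have Wcov: "W = (\<Union>U\<in>UU. W \<inter> fst U)"
    proof
      show "W \<subseteq> (\<Union>U\<in>UU. W \<inter> fst U)"
      proof
        fix v assume v: "v \<in> W"
        then obtain L where L: "L \<in> LL" "v \<in> WL L" unfolding W_def by blast
        have vL: "v \<in> snd L" using WLsub L by blast
        obtain x0 where x0: "x0 \<in> fst L" using node_sides(3)[OF idx(1,3) t(3) LLnode[OF L(1)]] by blast
        have x0N: "x0 \<in> fst N" using LLfst[OF L(1)] x0 by blast
        obtain x' where x': "x' \<in> fst N" "lt le x' v"
          using lower_child(2)[OF idx(1,3,2) t(3,4,5) LLnode[OF L(1)] x0 x0N] vL by blast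
        have vt: "v \<in> A t" using vL node_sub[OF LLnode[OF L(1)]] by blast
        obtain y where y: "y \<in> A s" "lt le v y" using acle_down_lt[OF idx(3,2) t(4) vt] by blast
        have P3: "x' \<in> P" "v \<in> P" "y \<in> P" using x'(1) NP vt y(1) Asub idx by blast+
        have "lt le x' y" using lt_le_trans[OF P3 x'(2)] y(2) unfolding lt_def by blast
        then have yN: "y \<in> snd N" using node_right[OF idx(1,2) Lps t(5) x'(1) y(1)] by blast
        have d: "A t \<inter> A s = {}" using idx_lt_disj(2)[OF idx(3,2) t(4)] .
        define Uv where "Uv = cnode le (A t) (A s) v"
        have nU: "node_of le (A t) (A s) Uv" unfolding Uv_def using cnode_node(1)[OF d] vt by blast
        have vU: "v \<in> fst Uv" unfolding Uv_def using cnode_fst[OF vt] .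
        have "bip_edge le (A t) (A s) v y" unfolding bip_edge_def using vt y by blast
        then have yU: "y \<in> snd Uv" unfolding Uv_def using cnode_nbr y(1) by metis
        have "node_int P le Uv \<subset> node_int P le N"
          using upper_child(3)[OF idx(1,3,2) t(3,4,5) nU yU yN] .
        then have "node_child P le A k Uv N" using mk_child[OF t(1,2,3,4,5) _] nU by blast
        then have "Uv \<in> UU" unfolding UU_def using nU by blast
        then show "v \<in> (\<Union>U\<in>UU. W \<inter> fst U)" using v vU by blast
      qed
    qed blast
    have cardW2: "card W = (\<Sum>U\<in>UU. card (W \<inter> fst U))"
    proof -
      have "card (\<Union>U\<in>UU. W \<inter> fst U) = (\<Sum>U\<in>UU. card (W \<inter> fst U))"
      proof (rule card_UN_disjoint[OF finUU])
        show "\<forall>U\<in>UU. finite (W \<inter> fst U)" using finW by blast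
        show "\<forall>U\<in>UU. \<forall>U'\<in>UU. U \<noteq> U' \<longrightarrow> (W \<inter> fst U) \<inter> (W \<inter> fst U') = {}"
        proof (intro ballI impI)
          fix U U' assume h: "U \<in> UU" "U' \<in> UU" "U \<noteq> U'"
          show "(W \<inter> fst U) \<inter> (W \<inter> fst U') = {}"
          proof (rule ccontr)
            assume "(W \<inter> fst U) \<inter> (W \<inter> fst U') \<noteq> {}"
            then obtain z where "z \<in> fst U" "z \<in> fst U'" by blast
            then have "U = U'" using node_disj[OF idx(3,2) t(4) UUnode[OF h(1)] UUnode[OF h(2)]] by blast
            then show False using h(3) by blast
          qed
        qed
      qed
      then show ?thesis using Wcov by simp
    qed
    have Usub: "(\<Union>U\<in>UU. WU U) \<subseteq> UpB YS N AA B"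
    proof
      fix y assume "y \<in> (\<Union>U\<in>UU. WU U)"
      then obtain U where U: "U \<in> UU" "y \<in> WU U" by blast
      have yN: "y \<in> snd N" using U WUsub UUsnd by blast
      have yP: "y \<in> P" using yN NP by blast
      from U(2) consider (a) b where "b \<in> W" "b \<in> fst U" "le b y"
        | (b) K where "K \<in> AM U" "\<exists>y'\<in>YS K. le y' y"
        unfolding WU_def UpB_def by blast
      then show "y \<in> UpB YS N AA B"
      proof cases
        case a
        from a(1) obtain L where L: "L \<in> LL" "b \<in> WL L" unfolding W_def by blast
        have bP: "b \<in> P" using WLP L by blast
        from L(2) consider (a1) b0 where "b0 \<in> B" "le b0 b" | (b1) K' y' where "K' \<in> AM L" "y' \<in> YS K'" "le y' b"
          unfolding WL_def UpB_def by blast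
        then show ?thesis
        proof cases
          case a1
          have "le b0 y" using trans[OF _ bP yP a1(2) a(3)] a1(1) BP by blast
          then show ?thesis unfolding UpB_def using yN a1(1) by blast
        next
          case b1
          have K'S: "K' \<in> S" "K' \<in> AA" using b1(1) AS unfolding AM_def by blast+
          have y'P: "y' \<in> P" using XSP(2)[OF K'S(1)] b1(2) by blast
          have "le y' y" using trans[OF y'P bP yP b1(3) a(3)] .
          then show ?thesis unfolding UpB_def using yN K'S(2) b1(2) by blast
        qed
      next
        case b
        have "K \<in> AA" using b(1) unfolding AM_def by blast
        then show ?thesis unfolding UpB_def using yN b(2) by blast
      qed
    qed
    have cardWU: "card (\<Union>U\<in>UU. WU U) = (\<Sum>U\<in>UU. card (WU U))"
    proof (rule card_UN_disjoint[OF finUU])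
      show "\<forall>U\<in>UU. finite (WU U)" using finWU by blast
      show "\<forall>U\<in>UU. \<forall>U'\<in>UU. U \<noteq> U' \<longrightarrow> WU U \<inter> WU U' = {}"
      proof (intro ballI impI)
        fix U U' assume h: "U \<in> UU" "U' \<in> UU" "U \<noteq> U'"
        show "WU U \<inter> WU U' = {}"
        proof (rule ccontr)
          assume "WU U \<inter> WU U' \<noteq> {}"
          then obtain z where "z \<in> snd U" "z \<in> snd U'" using WUsub by blast
          then have "U = U'" using node_disj[OF idx(3,2) t(4) UUnode[OF h(1)] UUnode[OF h(2)]] by blast
          then show False using h(3) by blast
        qed
      qed
    qed
    have step2: "card W + c * (\<Sum>M\<in>UU. card (AM M)) \<le> card (UpB YS N AA B)"
    proof -
      have "card W + c * (\<Sum>M\<in>UU. card (AM M)) = (\<Sum>U\<in>UU. card (W \<inter> fst U) + c * card (AM U))"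
        using cardW2 by (simp add: sum.distrib sum_distrib_left)
      also have "\<dots> \<le> (\<Sum>U\<in>UU. card (WU U))" using IHU by (rule sum_mono)
      also have "\<dots> = card (\<Union>U\<in>UU. WU U)" using cardWU by simp
      also have "\<dots> \<le> card (UpB YS N AA B)" using card_mono[OF finU Usub] .
      finally show ?thesis .
    qed
    show ?thesis using step1 step2 cardAA by (simp add: distrib_left)
  qed
qed

end


lemma sqrt_arith:
  fixes w m :: nat
  assumes "nat \<lceil>sqrt (real w)\<rceil> * m \<le> w" "0 < w"
  shows "m \<le> nat \<lfloor>sqrt (real w)\<rfloor>"
proof (rule ccontr)
  assume "\<not> ?thesis"
  then have m: "nat \<lfloor>sqrt (real w)\<rfloor> < m" by simp
  define r where "r = sqrt (real w)"
  have r0: "0 \<le> r" unfolding r_def by simp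
  have r1: "0 < r" unfolding r_def using assms(2) by simp
  have rm: "real m > r"
  proof -
    have "real_of_int \<lfloor>r\<rfloor> + 1 \<le> real m" using m r0 unfolding r_def by linarith
    then show ?thesis by linarith
  qed
  have c: "real (nat \<lceil>r\<rceil>) \<ge> r" using r0 by linarith
  have "r * r < r * real m" using mult_strict_left_mono[OF rm r1] .
  also have "r * real m \<le> real (nat \<lceil>r\<rceil>) * real m" using mult_right_mono[OF c] by simp
  finally have g: "real (nat \<lceil>r\<rceil>) * real m > r * r" .
  have rr: "r * r = real w" unfolding r_def by simp
  have "real (nat \<lceil>r\<rceil>) * real m \<le> real w"
    using assms(1) unfolding r_def of_nat_mult[symmetric] of_nat_le_iff .
  then show False using g rr by linarith
qed

context RP begin

lemma clique_facts:
  assumes isK: "is_node P le A k K" and dc: "dilworth_clique le K c C"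
  shows "C \<inter> fst K \<subseteq> fst K" "C \<inter> snd K \<subseteq> snd K" "card (C \<inter> snd K) = c"
    "\<exists>f. bij_betw f (fst K) (snd K) \<and> (\<forall>x\<in>fst K. lt le x (f x)) \<and> f ` (C \<inter> fst K) = C \<inter> snd K"
    "\<forall>y\<in>C \<inter> snd K. maximal_in le C y" "\<forall>x\<in>C \<inter> fst K. minimal_in le C x"
proof -
  obtain t p s where t: "t \<in> {2..k}" "consecutive P le A t p s" "node_of le (A p) (A s) K"
    "p \<in> {1..k}" "s \<in> {1..k}" "Ls p s" using is_node_D[OF isK] by blast
  have d: "fst K \<inter> snd K = {}" using node_sub[OF t(3)] idx_lt_disj(2)[OF t(4,5,6)] by blast
  obtain xs ys f where c: "inj_on xs {..<c}" "inj_on ys {..<c}" "xs ` {..<c} \<subseteq> fst K" "ys ` {..<c} \<subseteq> snd K"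
    "\<forall>i<c. \<forall>j<c. lt le (xs i) (ys j)" "perfect_matching le (fst K) (snd K) f" "\<forall>i<c. f (xs i) = ys i"
    "C = xs ` {..<c} \<union> ys ` {..<c}"
    using dc unfolding dilworth_clique_def by blast
  have CX: "C \<inter> fst K = xs ` {..<c}" using c(3,4,8) d by blast
  have CY: "C \<inter> snd K = ys ` {..<c}" using c(3,4,8) d by blast
  show "C \<inter> fst K \<subseteq> fst K" "C \<inter> snd K \<subseteq> snd K" by blast+
  show "card (C \<inter> snd K) = c" using CY card_image[OF c(2)] by simp
  have "f ` (C \<inter> fst K) = C \<inter> snd K" unfolding CX CY using c(7) by (auto simp: image_iff)
  then show "\<exists>f. bij_betw f (fst K) (snd K) \<and> (\<forall>x\<in>fst K. lt le x (f x)) \<and> f ` (C \<inter> fst K) = C \<inter> snd K"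
    using c(6) unfolding perfect_matching_def by blast
  have KP: "fst K \<subseteq> P" "snd K \<subseteq> P" using is_node_P[OF isK] by blast+
  show "\<forall>y\<in>C \<inter> snd K. maximal_in le C y"
  proof
    fix y assume y: "y \<in> C \<inter> snd K"
    then obtain j where j: "j < c" "y = ys j" using CY by auto
    have "\<not> lt le y z" if z: "z \<in> C" for z
    proof
      assume yz: "lt le y z"
      from z consider i where "i < c" "z = xs i" | i where "i < c" "z = ys i" using c(8) by blast
      then show False
      proof cases
        case 1
        have "lt le (xs i) (ys j)" using c(5) 1(1) j(1) by blast
        moreover have zP: "z \<in> P" "y \<in> P" using 1 c(3) y KP by auto
        ultimately show False using yz antisym 1(2) j(2) unfolding lt_def by blast
      next
        case 2
        have "z \<in> snd K" using 2 c(4) by auto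
        then have "z \<in> A s" "y \<in> A s" using node_sub[OF t(3)] y by blast+
        then show False using Aanti[OF t(5)] yz unfolding lt_def by blast
      qed
    qed
    then show "maximal_in le C y" unfolding maximal_in_def using y by blast
  qed
  show "\<forall>x\<in>C \<inter> fst K. minimal_in le C x"
  proof
    fix x assume x: "x \<in> C \<inter> fst K"
    then obtain i where i: "i < c" "x = xs i" using CX by auto
    have "\<not> lt le z x" if z: "z \<in> C" for z
    proof
      assume zx: "lt le z x"
      from z consider j where "j < c" "z = xs j" | j where "j < c" "z = ys j" using c(8) by blast
      then show False
      proof cases
        case 2
        have "lt le (xs i) (ys j)" using c(5) 2(1) i(1) by blast
        moreover have zP: "z \<in> P" "x \<in> P" using 2 c(4) x KP by auto
        ultimately show False using zx antisym 2(2) i(2) unfolding lt_def by blast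
      next
        case 1
        have "z \<in> fst K" using 1 c(3) by auto
        then have "z \<in> A p" "x \<in> A p" using node_sub[OF t(3)] x by blast+
        then show False using Aanti[OF t(4)] zx unfolding lt_def by blast
      qed
    qed
    then show "minimal_in le C x" unfolding minimal_in_def using x by blast
  qed
qed

end



theorem lemma13:
  fixes P :: "'a set" and le :: "'a \<Rightarrow> 'a \<Rightarrow> bool" and A :: "nat \<Rightarrow> 'a set" and k :: nat
    and R :: "'a set \<times> 'a set \<Rightarrow> 'a set" and u :: nat and s :: enat
  assumes "regular_poset P le A k"
    and "\<forall>N. active P le A k N \<longrightarrow> dilworth_clique le N (clique_size P le) (R N)"
  shows "rel_width (active_nodes P le A k u s) (\<lambda>N K. N = K \<or> node_less le R N K)
           \<le> nat \<lfloor>sqrt (real (rel_width P le))\<rfloor>"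
proof -
  note H = assms(1) and HR = assms(2)
  define D where "D = active_nodes P le A k u s"
  define r where "r = (\<lambda>N K. N = K \<or> node_less le R N K)"
  have finP: "finite P" using H unfolding regular_poset_def by blast
  have maxm: "\<And>i. i \<in> {1..k} \<Longrightarrow> maximum_antichain P le (A i)"
    using H unfolding regular_poset_def by blast
  have Asub: "A i \<subseteq> P" if "i \<in> {1..k}" for i
    using maxm[OF that] unfolding maximum_antichain_def antichain_on_def by blast
  have isD: "is_node P le A k N" if "N \<in> D" for N
    using that unfolding D_def active_nodes_def active_def by blast
  have nodeD: "\<exists>p s'. p \<in> {1..k} \<and> s' \<in> {1..k} \<and> node_of le (A p) (A s') N" if hN: "is_node P le A k N" for N
  proof -
    obtain t p s' where t: "t \<in> {2..k}" "consecutive P le A t p s'" "node_of le (A p) (A s') N"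
      using hN unfolding is_node_def by blast
    then have "p \<in> {1..k}" "s' \<in> {1..k}" unfolding consecutive_def by auto
    then show ?thesis using t(3) by blast
  qed
  have Dsub: "D \<subseteq> Pow P \<times> Pow P"
  proof
    fix N assume "N \<in> D"
    then obtain p s' where ps: "p \<in> {1..k}" "s' \<in> {1..k}" "node_of le (A p) (A s') N"
      using nodeD isD by blast
    then have "fst N \<subseteq> P" "snd N \<subseteq> P" using Asub[OF ps(1)] Asub[OF ps(2)] unfolding node_of_def by blast+
    then show "N \<in> Pow P \<times> Pow P" by (cases N) auto
  qed
  have finD: "finite D" using finite_subset[OF Dsub] finP by simp
  define AC where "AC = {S. antichain_on D r S}"
  have finAC: "finite AC"
  proof (rule finite_subset)
    show "AC \<subseteq> Pow D" unfolding AC_def antichain_on_def by blast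
    show "finite (Pow D)" using finD by simp
  qed
  have neAC: "{} \<in> AC" unfolding AC_def antichain_on_def by blast
  have bnd: "card S \<le> nat \<lfloor>sqrt (real (rel_width P le))\<rfloor>" if SA: "S \<in> AC" for S
  proof (cases "S = {}")
    case True then show ?thesis by simp
  next
    case False
    then obtain K1 where K1: "K1 \<in> S" by blast
    have SD: "S \<subseteq> D" and Sant: "\<forall>x\<in>S. \<forall>y\<in>S. r x y \<longrightarrow> x = y"
      using SA unfolding AC_def antichain_on_def by blast+
    obtain p s' where ps: "p \<in> {1..k}" "s' \<in> {1..k}" "node_of le (A p) (A s') K1"
      using nodeD isD K1 SD by blast
    have "fst K1 \<union> snd K1 \<noteq> {}" using ps(3) unfolding node_of_def bip_component_def by blast
    then obtain i x where ix: "i \<in> {1..k}" "x \<in> A i" using ps unfolding node_of_def by blast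
    have "card (A i) > 0" using ix Asub finP finite_subset by (metis card_gt_0_iff empty_iff)
    then have wpos: "0 < rel_width P le" using maxm[OF ix(1)] unfolding maximum_antichain_def by simp
    interpret RP P le A k using H wpos by unfold_locales
    define c where "c = clique_size P le"
    define XS where "XS K = R K \<inter> fst K" for K
    define YS where "YS K = R K \<inter> snd K" for K
    have act: "active P le A k K \<and> characteristics P le K = (u, s)" if "K \<in> S" for K
      using that SD unfolding D_def active_nodes_def by blast
    have isn: "is_node P le A k K" if "K \<in> S" for K using act[OF that] unfolding active_def by blast
    have dc: "dilworth_clique le K c (R K)" if "K \<in> S" for K using act[OF that] HR unfolding c_def by blast
    note cf = clique_facts[OF isn dc]
    have S_fin: "finite S" using finite_subset[OF SD finD] .
    have S_cl: "\<forall>K\<in>S. XS K \<subseteq> fst K \<and> YS K \<subseteq> snd K \<and> card (YS K) = c \<and>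
        (\<exists>f. bij_betw f (fst K) (snd K) \<and> (\<forall>x\<in>fst K. lt le x (f x)) \<and> f ` XS K = YS K)"
    proof
      fix K assume h: "K \<in> S"
      show "XS K \<subseteq> fst K \<and> YS K \<subseteq> snd K \<and> card (YS K) = c \<and>
        (\<exists>f. bij_betw f (fst K) (snd K) \<and> (\<forall>x\<in>fst K. lt le x (f x)) \<and> f ` XS K = YS K)"
        unfolding XS_def YS_def using cf(1)[OF h h] cf(2)[OF h h] cf(3)[OF h h] cf(4)[OF h h] by blast
    qed
    have S_inc: "\<forall>K\<in>S. \<forall>K'\<in>S. K \<noteq> K' \<longrightarrow> (\<forall>y\<in>YS K. \<forall>x\<in>XS K'. \<not> le y x)"
    proof (intro ballI impI notI)
      fix K K' y x assume h: "K \<in> S" "K' \<in> S" "K \<noteq> K'" "y \<in> YS K" "x \<in> XS K'" "le y x"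
      have "maximal_in le (R K) y" using cf(5)[OF h(1) h(1)] h(4) unfolding YS_def by blast
      moreover have "minimal_in le (R K') x" using cf(6)[OF h(2) h(2)] h(5) unfolding XS_def by blast
      ultimately have "node_less le R K K'" unfolding node_less_def using h(6) by blast
      then have "r K K'" unfolding r_def by blast
      then show False using Sant h(1-3) by blast
    qed
    have S_tree: "\<forall>K\<in>S. \<forall>K'\<in>S. K \<noteq> K' \<longrightarrow> \<not> (node_child P le A k)\<^sup>+\<^sup>+ K K'"
    proof (intro ballI impI notI)
      fix K K' assume h: "K \<in> S" "K' \<in> S" "K \<noteq> K'" "(node_child P le A k)\<^sup>+\<^sup>+ K K'"
      have "characteristics P le K' = characteristics P le K" using act h(1,2) by simp
      moreover have "\<not> (\<exists>K'. (node_child P le A k)\<^sup>+\<^sup>+ K K' \<and> characteristics P le K' = characteristics P le K)"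
        using act[OF h(1)] unfolding active_def by (elim conjE)
      ultimately show False using h(4) by blast
    qed
    have S_node: "\<forall>K\<in>S. is_node P le A k K" using isn by blast
    have alld: "\<forall>K\<in>S. (node_child P le A k)\<^sup>*\<^sup>* K R0" using isn node_to_root by blast
    have "card {} + c * card S \<le> card (UpB YS R0 S {})"
      using main_inv[OF S_fin S_node S_cl S_inc S_tree root_is_node subset_refl alld, of "{}"] by simp
    also have "\<dots> \<le> card (snd R0)"
    proof -
      have "finite (snd R0)" using finite_subset[OF Asub[OF idx12(2)] finP] unfolding R0_def by simp
      then show ?thesis using card_mono UpB_sub by metis
    qed
    also have "\<dots> = rel_width P le" unfolding R0_def using Acard[OF idx12(2)] by simp
    finally have "c * card S \<le> rel_width P le" by simp
    then have "nat \<lceil>sqrt (real (rel_width P le))\<rceil> * card S \<le> rel_width P le"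
      unfolding c_def clique_size_def .
    then show ?thesis using sqrt_arith wpos by blast
  qed
  have "rel_width D r = Max (card ` AC)" unfolding rel_width_def AC_def ..
  also have "\<dots> \<le> nat \<lfloor>sqrt (real (rel_width P le))\<rfloor>"
    using finAC neAC bnd by (subst Max_le_iff) auto
  finally show ?thesis unfolding D_def r_def .
qed


end
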